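(* For every integer $N$, the polynomials $\phi_N(y,z)$ satisfy $$y\,\phi_{N+1}(y/q,z)\phi_N(y,z/q)-z\,\phi_{N+1}(y,z/q)\phi_N(y/q,z)=(y-z)\phi_{N+1}(y/q,z/q)\phi_N(y,z),$$ $$y\,\phi_{N+1}(y,z/q)\phi_N(y/q,z)-z\,\phi_{N+1}(y/q,z)\phi_N(y,z/q)=(y-z)\phi_{N+1}(y,z)\phi_N(y/q,z/q),$$ $$q^{-N-1}z\,\phi_{N+1}(y,z)\phi_N(y/q,z)+\phi_{N+1}(y/q,z)\phi_N(y,z)=(1+z)\phi_{N+1}(y/q,z/q)\phi_N(y,qz),$$ $$\phi_{N+1}(y/q,z)\phi_{N-1}(y,z)-\phi_{N+1}(y,z)\phi_{N-1}(y/q,z)=(1-q)\frac{y}{q}\,\phi_N(y/q,z)\phi_N(y,z),$$ $$\phi_{N+1}(y,z/q)\phi_{N-1}(y,z)-\phi_{N+1}(y,z)\phi_{N-1}(y,z/q)=(1-q)\frac{z}{q}\,\phi_N(y,z/q)\phi_N(y,z),$$ $$q^{2N}y\,\phi_N(y/q,z)\phi_N(y,z)+q^N(1+z)\phi_N(y,qz)\phi_N(y/q,z/q)=\frac{1-q^{2N+1}}{1-q}\,\phi_{N+1}(y,z)\phi_{N-1}(y/q,z).$$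
   Context: $q$ is a fixed nonzero complex constant that is not a root of unity; $y,z$ are variables. For $k\in\mathbb{Z}$ the polynomials $p_k(y,z)$ are defined by the generating function $\sum_{n\ge 0}p_n(y,z)t^n=\frac{(-(1-q)t;q)_\infty}{((1-q)yt;q)_\infty((1-q)zt;q)_\infty}$, with $(a;q)_\infty=\prod_{i\ge0}(1-aq^i)$, and $p_k=0$ for $k<0$; equivalently $p_n(y,z)=(1-q)^n\sum_{a+b+c=n}\frac{y^a z^b q^{c(c-1)/2}}{(q;q)_a(q;q)_b(q;q)_c}$ with $(q;q)_m=\prod_{j=1}^m(1-q^j)$. For $N>0$, $\phi_N(y,z)=\det\big(p_{N-2i+j+1}(y,z)\big)_{i,j=1}^N$; $\phi_0=1$; for $N<0$, $\phi_N=(-1)^{N(N+1)/2}\phi_{-N-1}$. *)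

theory Defs
  imports Complex_Main "Jordan_Normal_Form.Determinant"
begin

definition qpoch :: "complex \<Rightarrow> nat \<Rightarrow> complex" where
  "qpoch q m = (\<Prod>j=1..m. 1 - q ^ j)"

definition pp :: "complex \<Rightarrow> int \<Rightarrow> complex \<Rightarrow> complex \<Rightarrow> complex" where
  "pp q k y z = (if k < 0 then 0 else
     (1 - q) ^ nat k *
     (\<Sum>(a, b) \<in> {(a, b). a + b \<le> nat k}.
        let c = nat k - a - b in
        y ^ a * z ^ b * q ^ (c * (c - 1) div 2) / (qpoch q a * qpoch q b * qpoch q c)))"

text \<open>phi_n for n \<ge> 0: the n x n determinant det(p_{n-2i+j+1})_{i,j=1..n}
  (indices shifted to 0-based: entry (i,j) is p_{n-2(i+1)+(j+1)+1}); phi_0 = 1.\<close>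
definition phi_nat :: "complex \<Rightarrow> nat \<Rightarrow> complex \<Rightarrow> complex \<Rightarrow> complex" where
  "phi_nat q n y z = (if n = 0 then 1 else
     det (mat n n (\<lambda>(i, j). pp q (int n - 2 * (int i + 1) + (int j + 1) + 1) y z)))"

definition phi :: "complex \<Rightarrow> int \<Rightarrow> complex \<Rightarrow> complex \<Rightarrow> complex" where
  "phi q N y z = (if N \<ge> 0 then phi_nat q (nat N) y z
     else (-1) ^ nat (N * (N + 1) div 2) * phi_nat q (nat (- N - 1)) y z)"

end

theory Submission
  imports Defs "HOL-Computational_Algebra.Formal_Power_Series"
begin

lemma mat_cong: "(\<And>i j. i < n \<Longrightarrow> j < m \<Longrightarrow> f (i,j) = g (i,j)) \<Longrightarrow> mat n m f = mat n m g"
  by (rule eq_matI) auto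

lemma det_laplace_row_fun:
  fixes F :: "nat \<Rightarrow> nat \<Rightarrow> 'a :: comm_ring_1"
  assumes "k < n"
  shows "det (mat n n (\<lambda>(i,j). F i j)) = (\<Sum>j<n. F k j * cofactor (mat n n (\<lambda>(i,j). F i j)) k j)"
  using laplace_expansion_row[of "mat n n (\<lambda>(i,j). F i j)" n k] assms by simp

lemma mat_delete_mat:
  "mat_delete (mat n n (\<lambda>(i,j). F i j)) r c =
     mat (n-1) (n-1) (\<lambda>(i,j). F (if i < r then i else Suc i) (if j < c then j else Suc j))"
  unfolding mat_delete_def dim_row_mat dim_col_mat by (rule mat_cong) auto

lemma cofactor_cong:
  fixes F G :: "nat \<Rightarrow> nat \<Rightarrow> 'a :: comm_ring_1"
  assumes "\<And>i j. i < n \<Longrightarrow> j < n \<Longrightarrow> i \<noteq> k \<Longrightarrow> F i j = G i j"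
  shows "cofactor (mat n n (\<lambda>(i,j). F i j)) k c = cofactor (mat n n (\<lambda>(i,j). G i j)) k c"
proof -
  have "mat_delete (mat n n (\<lambda>(i,j). F i j)) k c = mat_delete (mat n n (\<lambda>(i,j). G i j)) k c"
    unfolding mat_delete_mat by (rule mat_cong) (auto intro!: assms)
  thus ?thesis unfolding cofactor_def by simp
qed

lemma det_row_lin:
  fixes F G H :: "nat \<Rightarrow> nat \<Rightarrow> 'a :: comm_ring_1"
  assumes k: "k < n"
    and fg: "\<And>i j. i < n \<Longrightarrow> j < n \<Longrightarrow> i \<noteq> k \<Longrightarrow> F i j = G i j"
    and fh: "\<And>i j. i < n \<Longrightarrow> j < n \<Longrightarrow> i \<noteq> k \<Longrightarrow> F i j = H i j"
    and row: "\<And>j. j < n \<Longrightarrow> F k j = a * G k j + b * H k j"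
  shows "det (mat n n (\<lambda>(i,j). F i j)) = a * det (mat n n (\<lambda>(i,j). G i j)) + b * det (mat n n (\<lambda>(i,j). H i j))"
proof -
  let ?cF = "\<lambda>j. cofactor (mat n n (\<lambda>(i,j). F i j)) k j"
  have cg: "\<And>j. ?cF j = cofactor (mat n n (\<lambda>(i,j). G i j)) k j" by (rule cofactor_cong) (auto intro: fg)
  have ch: "\<And>j. ?cF j = cofactor (mat n n (\<lambda>(i,j). H i j)) k j" by (rule cofactor_cong) (auto intro: fh)
  have "det (mat n n (\<lambda>(i,j). F i j)) = (\<Sum>j<n. F k j * ?cF j)" by (rule det_laplace_row_fun[OF k])
  also have "\<dots> = (\<Sum>j<n. a * (G k j * ?cF j) + b * (H k j * ?cF j))"
    by (rule sum.cong) (auto simp: row algebra_simps)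
  also have "\<dots> = a * (\<Sum>j<n. G k j * ?cF j) + b * (\<Sum>j<n. H k j * ?cF j)"
    by (simp add: sum.distrib sum_distrib_left)
  also have "\<dots> = a * det (mat n n (\<lambda>(i,j). G i j)) + b * det (mat n n (\<lambda>(i,j). H i j))"
    by (simp add: det_laplace_row_fun[OF k, of G] det_laplace_row_fun[OF k, of H] cg[symmetric] ch[symmetric])
  finally show ?thesis .
qed

lemma det_unit_row:
  fixes F :: "nat \<Rightarrow> nat \<Rightarrow> 'a :: comm_ring_1"
  assumes r: "r < n" and c: "c < n" and row: "\<And>j. j < n \<Longrightarrow> F r j = (if j = c then 1 else 0)"
  shows "det (mat n n (\<lambda>(i,j). F i j)) = (-1)^(r+c) *
     det (mat (n-1) (n-1) (\<lambda>(i,j). F (if i < r then i else Suc i) (if j < c then j else Suc j)))"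
proof -
  have "det (mat n n (\<lambda>(i,j). F i j)) = (\<Sum>j<n. F r j * cofactor (mat n n (\<lambda>(i,j). F i j)) r j)"
    by (rule det_laplace_row_fun[OF r])
  also have "\<dots> = (\<Sum>j<n. if j = c then cofactor (mat n n (\<lambda>(i,j). F i j)) r c else 0)"
    by (rule sum.cong) (auto simp: row)
  also have "\<dots> = cofactor (mat n n (\<lambda>(i,j). F i j)) r c" using c by simp
  finally show ?thesis unfolding cofactor_def mat_delete_mat .
qed

lemma det_identical_rows_fun:
  fixes F :: "nat \<Rightarrow> nat \<Rightarrow> 'a :: comm_ring_1"
  assumes "a < n" "b < n" "a \<noteq> b" "\<And>c. c < n \<Longrightarrow> F a c = F b c"
  shows "det (mat n n (\<lambda>(i,j). F i j)) = 0"
  by (rule det_identical_rows[of _ n a b]) (use assms in \<open>auto intro!: eq_vecI\<close>)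

lemma border:
  fixes C :: "nat \<Rightarrow> nat \<Rightarrow> 'a :: comm_ring_1"
  shows "det (mat (Suc n) (Suc n) (\<lambda>(i,j). if i = 0 then x^j else C (i-1) j)) =
         det (mat n n (\<lambda>(i,j). C i (Suc j) - x * C i j))"
proof -
  define A' where "A' = (\<lambda>i j. if i = 0 then x^j else C (i-1) j)"
  define A where "A = mat (Suc n) (Suc n) (\<lambda>(i,j). A' i j)"
  define U where "U = mat (Suc n) (Suc n) (\<lambda>(i,j). if i = j then 1 else if Suc i = j then -x else (0::'a))"
  define G where "G = (\<lambda>i j. if j = 0 then A' i 0 else A' i j - x * A' i (j - 1))"
  have A: "A \<in> carrier_mat (Suc n) (Suc n)" and U: "U \<in> carrier_mat (Suc n) (Suc n)"
    unfolding A_def U_def by auto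
  have dU: "det U = 1"
  proof -
    have "det U = prod_list (diag_mat U)"
      by (rule det_upper_triangular[OF _ U]) (auto simp: upper_triangular_def U_def)
    also have "diag_mat U = map (\<lambda>i. 1) [0..<Suc n]"
      unfolding diag_mat_def U_def by auto
    also have "prod_list (map (\<lambda>i. 1::'a) [0..<Suc n]) = 1"
      by (induct n) auto
    finally show ?thesis .
  qed
  have AU: "A * U = mat (Suc n) (Suc n) (\<lambda>(i,j). G i j)"
  proof (rule eq_matI)
    fix i j assume i: "i < dim_row (mat (Suc n) (Suc n) (\<lambda>(i,j). G i j))"
      and j: "j < dim_col (mat (Suc n) (Suc n) (\<lambda>(i,j). G i j))"
    hence i: "i < Suc n" and j: "j < Suc n" by auto
    have "(A * U) $$ (i,j) = row A i \<bullet> col U j" using i j A U by simp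
    also have "\<dots> = (\<Sum>k \<in> {0..<dim_vec (col U j)}. row A i $ k * col U j $ k)"
      by (simp only: scalar_prod_def)
    also have "\<dots> = (\<Sum>k \<in> {0..<Suc n}. A' i k * U $$ (k, j))"
      using i j A U by (intro sum.cong) (auto simp: A_def)
    also have "\<dots> = (\<Sum>k \<in> {0..<Suc n}. (if k = j then A' i k else 0) +
                      (if j \<noteq> 0 \<and> k = j - 1 then - x * A' i k else 0))"
      by (rule sum.cong) (use j in \<open>auto simp: U_def\<close>)
    also have "\<dots> = G i j"
      unfolding sum.distrib using j by (auto simp: G_def)
    finally show "(A * U) $$ (i,j) = mat (Suc n) (Suc n) (\<lambda>(i,j). G i j) $$ (i,j)"
      using i j by simp
  qed (use A U in auto)
  have "det A = det (A * U)" using det_mult[OF A U] dU by simp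
  also have "\<dots> = det (mat (Suc n) (Suc n) (\<lambda>(i,j). G i j))" by (simp add: AU)
  also have "\<dots> = (-1)^(0+0) * det (mat (Suc n - 1) (Suc n - 1)
       (\<lambda>(i,j). G (if i < 0 then i else Suc i) (if j < 0 then j else Suc j)))"
    by (rule det_unit_row) (auto simp: G_def A'_def power_eq_if)
  also have "\<dots> = det (mat n n (\<lambda>(i,j). C i (Suc j) - x * C i j))"
    by (simp, rule arg_cong[where f = det], rule mat_cong) (auto simp: G_def A'_def)
  finally show ?thesis by (simp add: A_def A'_def)
qed

definition rowsel :: "(nat \<Rightarrow> 'a) \<Rightarrow> (nat \<Rightarrow> 'a) \<Rightarrow> (nat \<Rightarrow> nat \<Rightarrow> 'a) \<Rightarrow> nat \<Rightarrow> nat \<Rightarrow> 'a" where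
  "rowsel u v L i = (if i = 0 then u else if i = 1 then v else L (i - 2))"

definition P2 :: "nat \<Rightarrow> (nat \<Rightarrow> nat \<Rightarrow> 'a::comm_ring_1) \<Rightarrow> (nat \<Rightarrow> 'a) \<Rightarrow> (nat \<Rightarrow> 'a) \<Rightarrow> 'a" where
  "P2 k L u v = det (mat (k+2) (k+2) (\<lambda>(i,j). rowsel u v L i j))"

lemma P2_antisym: "P2 k L u v = - P2 k L v u"
proof -
  let ?A = "mat (k+2) (k+2) (\<lambda>(i,j). rowsel v u L i j)"
  have "det (swaprows 0 1 ?A) = - det ?A" by (rule det_swaprows[of 0 "k+2" 1]) auto
  moreover have "swaprows 0 1 ?A = mat (k+2) (k+2) (\<lambda>(i,j). rowsel u v L i j)"
    unfolding mat_swaprows_def by (rule eq_matI) (auto simp: rowsel_def)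
  ultimately show ?thesis unfolding P2_def by simp
qed

lemma P2_same: "P2 k L u u = 0"
  unfolding P2_def by (rule det_identical_rows_fun[of 0 _ 1]) (auto simp: rowsel_def)

lemma P2_Lrow: "r < k \<Longrightarrow> P2 k L (L r) v = 0"
  unfolding P2_def by (rule det_identical_rows_fun[of 0 _ "r+2"]) (auto simp: rowsel_def)

lemma P2_lin1:
  assumes "\<And>j. j < k+2 \<Longrightarrow> u j = a * u1 j + b * u2 j"
  shows "P2 k L u v = a * P2 k L u1 v + b * P2 k L u2 v"
  unfolding P2_def by (rule det_row_lin[of 0]) (auto simp: rowsel_def assms)

lemma P2_lin2:
  assumes "\<And>j. j < k+2 \<Longrightarrow> v j = a * v1 j + b * v2 j"
  shows "P2 k L u v = a * P2 k L u v1 + b * P2 k L u v2"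
  unfolding P2_def by (rule det_row_lin[of 1]) (auto simp: rowsel_def assms)

lemma P2_cong:
  assumes "\<And>j. j < k+2 \<Longrightarrow> u j = u' j" "\<And>j. j < k+2 \<Longrightarrow> v j = v' j"
    "\<And>i j. i < k \<Longrightarrow> j < k+2 \<Longrightarrow> L i j = L' i j"
  shows "P2 k L u v = P2 k L' u' v'"
  unfolding P2_def by (rule arg_cong[where f = det], rule mat_cong) (auto simp: rowsel_def assms)

lemma pluecker:
  fixes L :: "nat \<Rightarrow> nat \<Rightarrow> 'a::idom"
  shows "P2 k L u1 u2 * P2 k L u3 u4 - P2 k L u1 u3 * P2 k L u2 u4 + P2 k L u1 u4 * P2 k L u2 u3 = 0"
proof -
  define c where "c j = cofactor (mat (k+2) (k+2) (\<lambda>(i,j). rowsel (\<lambda>_. 0) u4 L i j)) 0 j" for j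
  have flin: "P2 k L v u4 = (\<Sum>j<k+2. v j * c j)" for v
  proof -
    have "P2 k L v u4 = (\<Sum>j<k+2. rowsel v u4 L 0 j * cofactor (mat (k+2) (k+2) (\<lambda>(i,j). rowsel v u4 L i j)) 0 j)"
      unfolding P2_def by (rule det_laplace_row_fun) simp
    also have "\<dots> = (\<Sum>j<k+2. v j * c j)"
    proof (rule sum.cong[OF refl])
      fix j
      have "cofactor (mat (k+2) (k+2) (\<lambda>(i,j). rowsel v u4 L i j)) 0 j = c j"
        unfolding c_def by (rule cofactor_cong) (auto simp: rowsel_def)
      thus "rowsel v u4 L 0 j * cofactor (mat (k+2) (k+2) (\<lambda>(i,j). rowsel v u4 L i j)) 0 j = v j * c j"
        by (simp add: rowsel_def)
    qed
    finally show ?thesis .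
  qed
  define W where "W i = (if i = 0 then u3 else if i = 1 then u1 else if i = 2 then u2 else L (i - 3))" for i
  define NF where "NF i j = (if j < k+2 then W i j else P2 k L (W i) u4)" for i j
  define N where "N = mat (k+3) (k+3) (\<lambda>(i,j). NF i j)"
  have N: "N \<in> carrier_mat (k+3) (k+3)" by (simp add: N_def)
  have detN: "det N = 0"
  proof -
    define w where "w = vec (k+3) (\<lambda>j. if j < k+2 then c j else -1)"
    have "w \<in> carrier_vec (k+3)" by (simp add: w_def)
    moreover have "w \<noteq> 0\<^sub>v (k+3)"
    proof
      assume "w = 0\<^sub>v (k+3)" hence "w $ (k+2) = 0\<^sub>v (k+3) $ (k+2)" by simp
      thus False by (simp add: w_def)
    qed
    moreover have "N *\<^sub>v w = 0\<^sub>v (k+3)"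
    proof (rule eq_vecI)
      fix i assume "i < dim_vec (0\<^sub>v (k+3) :: 'a vec)" hence i: "i < k+3" by simp
      have "(N *\<^sub>v w) $ i = row N i \<bullet> w" using i N by simp
      also have "\<dots> = (\<Sum>j \<in> {0..<dim_vec w}. row N i $ j * w $ j)" by (simp only: scalar_prod_def)
      also have "\<dots> = (\<Sum>j<Suc (k+2). NF i j * (if j < k+2 then c j else -1))"
        using i by (intro sum.cong) (auto simp: N_def w_def)
      also have "\<dots> = (\<Sum>j<k+2. NF i j * (if j < k+2 then c j else -1)) + NF i (k+2) * (-1)"
        by simp
      also have "(\<Sum>j<k+2. NF i j * (if j < k+2 then c j else -1)) = (\<Sum>j<k+2. W i j * c j)"
        by (intro sum.cong) (auto simp: NF_def)
      also have "(\<Sum>j<k+2. W i j * c j) + NF i (k+2) * (-1) = 0"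
        using flin[of "W i"] by (simp add: NF_def)
      finally show "(N *\<^sub>v w) $ i = 0\<^sub>v (k+3) $ i" using i by simp
    qed (simp add: N_def)
    ultimately show ?thesis using det_0_iff_vec_prod_zero[OF N] by blast
  qed
  have cof: "cofactor N i (k+2) = (-1)^(i+(k+2)) * det (mat (k+2) (k+2)
        (\<lambda>(a,b). NF (if a < i then a else Suc a) (if b < k+2 then b else Suc b)))" for i
    unfolding cofactor_def N_def mat_delete_mat by simp
  have c0: "det (mat (k+2) (k+2) (\<lambda>(a,b). NF (if a < 0 then a else Suc a) (if b < k+2 then b else Suc b)))
      = P2 k L u1 u2"
    unfolding P2_def by (rule arg_cong[where f=det], rule mat_cong) (auto simp: NF_def W_def rowsel_def)
  have c1: "det (mat (k+2) (k+2) (\<lambda>(a,b). NF (if a < 1 then a else Suc a) (if b < k+2 then b else Suc b)))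
      = P2 k L u3 u2"
    unfolding P2_def by (rule arg_cong[where f=det], rule mat_cong) (auto simp: NF_def W_def rowsel_def)
  have c2: "det (mat (k+2) (k+2) (\<lambda>(a,b). NF (if a < 2 then a else Suc a) (if b < k+2 then b else Suc b)))
      = P2 k L u3 u1"
    unfolding P2_def by (rule arg_cong[where f=det], rule mat_cong) (auto simp: NF_def W_def rowsel_def)
  have "det N = (\<Sum>i<k+3. N $$ (i, k+2) * cofactor N i (k+2))"
    by (rule laplace_expansion_column[OF N]) simp
  also have "\<dots> = (\<Sum>i<Suc (Suc (Suc k)). NF i (k+2) * cofactor N i (k+2))"
    by (intro sum.cong) (auto simp: N_def)
  also have "\<dots> = NF 0 (k+2) * cofactor N 0 (k+2) + (NF 1 (k+2) * cofactor N 1 (k+2) +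
      (NF 2 (k+2) * cofactor N 2 (k+2) + (\<Sum>i<k. NF (i+3) (k+2) * cofactor N (i+3) (k+2))))"
    by (simp only: sum.lessThan_Suc_shift) (simp add: numeral_eq_Suc)
  also have "(\<Sum>i<k. NF (i+3) (k+2) * cofactor N (i+3) (k+2)) = 0"
    by (rule sum.neutral) (auto simp: NF_def W_def P2_Lrow)
  finally have "0 = P2 k L u3 u4 * ((-1)^(k+2) * P2 k L u1 u2) + (P2 k L u1 u4 * ((-1)^(1+(k+2)) * P2 k L u3 u2)
       + P2 k L u2 u4 * ((-1)^(2+(k+2)) * P2 k L u3 u1))"
    using detN unfolding cof c0 c1 c2 by (simp add: NF_def W_def)
  hence "(-1)^k * (P2 k L u1 u2 * P2 k L u3 u4 - P2 k L u1 u3 * P2 k L u2 u4 + P2 k L u1 u4 * P2 k L u2 u3) = 0"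
    using P2_antisym[of k L u3 u2] P2_antisym[of k L u3 u1] by (simp add: algebra_simps)
  thus ?thesis by simp
qed


definition ev :: "nat \<Rightarrow> nat \<Rightarrow> 'a::zero_neq_one" where "ev c j = (if j = c then 1 else 0)"

lemma embedY:
  fixes L :: "nat \<Rightarrow> nat \<Rightarrow> 'a::comm_ring_1"
  shows "P2 (k+1) (\<lambda>i. if i < k then L i else ev (k+2)) u (ev (k+1)) =
     (-1)^k * det (mat (k+1) (k+1) (\<lambda>(i,j). if i = 0 then u j else L (i-1) j))"
proof -
  let ?L = "\<lambda>i. if i < k then L i else ev (k+2)"
  have d1: "k+1+2-1 = k+2" "k+2-1 = k+1" by simp_all
  have s1: "(-1::'a)^((k+2)+(k+2)) = 1" by (simp add: power_add power_mult_distrib[symmetric])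
  have s2: "(-1::'a)^(1+(k+1)) = (-1)^k" by (simp add: power_add)
  have "P2 (k+1) ?L u (ev (k+1)) = (-1)^((k+2)+(k+2)) * det (mat (k+1+2-1) (k+1+2-1)
     (\<lambda>(i,j). rowsel u (ev (k+1)) ?L (if i < k+2 then i else Suc i) (if j < k+2 then j else Suc j)))"
    unfolding P2_def by (rule det_unit_row) (auto simp: rowsel_def ev_def)
  also have "\<dots> = det (mat (k+2) (k+2) (\<lambda>(i,j). rowsel u (ev (k+1)) ?L i j))"
    unfolding s1 d1 by (simp, rule arg_cong[where f=det], rule mat_cong) auto
  also have "\<dots> = (-1)^(1+(k+1)) * det (mat (k+2-1) (k+2-1)
     (\<lambda>(i,j). rowsel u (ev (k+1)) ?L (if i < 1 then i else Suc i) (if j < k+1 then j else Suc j)))"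
    by (rule det_unit_row) (auto simp: rowsel_def ev_def)
  also have "\<dots> = (-1)^k * det (mat (k+1) (k+1) (\<lambda>(i,j). if i = 0 then u j else L (i-1) j))"
    unfolding s2 d1 by (rule arg_cong[where f="\<lambda>x. _ * det x"], rule mat_cong) (auto simp: rowsel_def)
  finally show ?thesis .
qed

lemma embedX:
  fixes L :: "nat \<Rightarrow> nat \<Rightarrow> 'a::comm_ring_1"
  shows "P2 (k+1) (\<lambda>i. if i < k then L i else ev (k+1)) u (ev (k+2)) =
     - ((-1)^k * det (mat (k+1) (k+1) (\<lambda>(i,j). if i = 0 then u j else L (i-1) j)))"
proof -
  let ?L = "\<lambda>i. if i < k then L i else ev (k+1)"
  have d1: "k+1+2-1 = k+2" "k+2-1 = k+1" by simp_all
  have s1: "(-1::'a)^((k+2)+(k+1)) = -1" by (simp add: power_add power_mult_distrib[symmetric])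
  have s2: "(-1::'a)^(1+(k+1)) = (-1)^k" by (simp add: power_add)
  have "P2 (k+1) ?L u (ev (k+2)) = (-1)^((k+2)+(k+1)) * det (mat (k+1+2-1) (k+1+2-1)
     (\<lambda>(i,j). rowsel u (ev (k+2)) ?L (if i < k+2 then i else Suc i) (if j < k+1 then j else Suc j)))"
    unfolding P2_def by (rule det_unit_row) (simp_all add: rowsel_def ev_def)
  also have "\<dots> = - det (mat (k+2) (k+2) (\<lambda>(i,j). rowsel (\<lambda>j. u (if j < k+1 then j else Suc j)) (ev (k+1))
        (\<lambda>i j. L i (if j < k+1 then j else Suc j)) i j))"
    unfolding s1 d1 by (simp, rule arg_cong[where f=det], rule mat_cong) (auto simp: rowsel_def ev_def)
  also have "det (mat (k+2) (k+2) (\<lambda>(i,j). rowsel (\<lambda>j. u (if j < k+1 then j else Suc j)) (ev (k+1))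
        (\<lambda>i j. L i (if j < k+1 then j else Suc j)) i j)) =
     (-1)^(1+(k+1)) * det (mat (k+2-1) (k+2-1)
     (\<lambda>(i,j). rowsel (\<lambda>j. u (if j < k+1 then j else Suc j)) (ev (k+1))
        (\<lambda>i j. L i (if j < k+1 then j else Suc j)) (if i < 1 then i else Suc i) (if j < k+1 then j else Suc j)))"
    by (rule det_unit_row) (simp_all add: rowsel_def ev_def)
  also have "\<dots> = (-1)^k * det (mat (k+1) (k+1) (\<lambda>(i,j). if i = 0 then u j else L (i-1) j))"
    unfolding s2 d1 by (rule arg_cong[where f="\<lambda>x. _ * det x"], rule mat_cong) (auto simp: rowsel_def)
  finally show ?thesis by simp
qed

definition D :: "nat \<Rightarrow> (int \<Rightarrow> complex) \<Rightarrow> complex" where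
  "D n g = det (mat n n (\<lambda>(i,j). g (int n - 2 * int i + int j)))"

definition rem :: "complex \<Rightarrow> (int \<Rightarrow> complex) \<Rightarrow> int \<Rightarrow> complex" where
  "rem x g k = g k - x * g (k - 1)"

definition rv :: "complex \<Rightarrow> nat \<Rightarrow> complex" where "rv x j = x ^ j"

lemma rem0[simp]: "rem 0 g = g" by (rule ext) (simp add: rem_def)

lemma rep1: "D n (rem x g) = det (mat (Suc n) (Suc n) (\<lambda>(i,j). if i = 0 then x^j else g (int n - 1 - 2 * int (i - 1) + int j)))"
proof -
  have "D n (rem x g) = det (mat n n (\<lambda>(i,j). (\<lambda>i j. g (int n - 1 - 2 * int i + int j)) i (Suc j) - x * (\<lambda>i j. g (int n - 1 - 2 * int i + int j)) i j))"
    unfolding D_def rem_def by (rule arg_cong[where f=det], rule mat_cong) (auto simp: algebra_simps)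
  also have "\<dots> = det (mat (Suc n) (Suc n) (\<lambda>(i,j). if i = 0 then x^j else g (int n - 1 - 2 * int (i - 1) + int j)))"
    by (rule border[symmetric])
  finally show ?thesis .
qed

lemma rep2:
  "P2 n (\<lambda>i j. g (int n - 2 - 2 * int i + int j)) (rv y) (rv x) = (x - y) * D n (rem x (rem y g))"
proof -
  let ?L = "\<lambda>i j. g (int n - 2 - 2 * int i + int j)"
  let ?C = "\<lambda>i j. if i = 0 then x^j else ?L (i-1) j"
  have "P2 n ?L (rv y) (rv x) = det (mat (Suc (Suc n)) (Suc (Suc n)) (\<lambda>(i,j). if i = 0 then y^j else ?C (i-1) j))"
    unfolding P2_def add_2_eq_Suc' by (rule arg_cong[where f=det]) (rule mat_cong, auto simp: rowsel_def rv_def)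
  also have "\<dots> = det (mat (Suc n) (Suc n) (\<lambda>(i,j). ?C i (Suc j) - y * ?C i j))"
    by (rule border)
  also have "\<dots> = (x - y) * det (mat (Suc n) (Suc n) (\<lambda>(i,j). if i = 0 then x^j else ?L (i-1) (Suc j) - y * ?L (i-1) j))
      + 0 * det (mat (Suc n) (Suc n) (\<lambda>(i,j). if i = 0 then x^j else ?L (i-1) (Suc j) - y * ?L (i-1) j))"
    by (rule det_row_lin[of 0]) (auto simp: algebra_simps)
  also have "det (mat (Suc n) (Suc n) (\<lambda>(i,j). if i = 0 then x^j else ?L (i-1) (Suc j) - y * ?L (i-1) j))
     = D n (rem x (rem y g))"
    unfolding rep1 by (rule arg_cong[where f=det], rule mat_cong) (auto simp: rem_def algebra_simps)
  finally show ?thesis by simp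
qed

lemma rep3:
  "P2 n (\<lambda>i j. g (int n - 2 - 2 * int i + int j)) (rv y) (\<lambda>j. g (int n + int j)) = D (Suc n) (rem y g)"
  unfolding rep1 P2_def add_2_eq_Suc' by (rule arg_cong[where f=det], rule mat_cong) (auto simp: rowsel_def rv_def algebra_simps)

lemma split_row:
  assumes "\<And>j. j < k+3 \<Longrightarrow> L k j = g0 * ev (k+1) j + g1 * ev (k+2) j"
  shows "P2 (k+1) L u v = g0 * P2 (k+1) (\<lambda>i. if i < k then L i else ev (k+1)) u v
                        + g1 * P2 (k+1) (\<lambda>i. if i < k then L i else ev (k+2)) u v"
  unfolding P2_def by (rule det_row_lin[of "k+2"]) (auto simp: rowsel_def assms)

lemma G1:
  "a * D (Suc n) (rem b g) * D n (rem a g) - b * D (Suc n) (rem a g) * D n (rem b g)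
     = (a - b) * D (Suc n) g * D n (rem a (rem b g))"
proof -
  let ?L = "\<lambda>i j. g (int n - 2 - 2 * int i + int j)"
  let ?R = "\<lambda>j. g (int n + int j)"
  let ?P = "P2 n ?L"
  have r1: "?P (rv b) ?R = D (Suc n) (rem b g)" by (rule rep3)
  have r2: "?P (rv 0) (rv a) = a * D n (rem a g)" using rep2[of n g 0 a] by simp
  have r3: "?P (rv a) ?R = D (Suc n) (rem a g)" by (rule rep3)
  have r4: "?P (rv 0) (rv b) = b * D n (rem b g)" using rep2[of n g 0 b] by simp
  have r5: "?P (rv 0) ?R = D (Suc n) g" using rep3[of n g 0] by simp
  have r6: "?P (rv b) (rv a) = (a - b) * D n (rem a (rem b g))" by (rule rep2)
  have pl: "?P (rv 0) ?R * ?P (rv a) (rv b) - ?P (rv 0) (rv a) * ?P ?R (rv b) + ?P (rv 0) (rv b) * ?P ?R (rv a) = 0"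
    by (rule pluecker)
  have an: "?P (rv a) (rv b) = - ?P (rv b) (rv a)" "?P ?R (rv b) = - ?P (rv b) ?R" "?P ?R (rv a) = - ?P (rv a) ?R"
    by (rule P2_antisym)+
  from pl have "?P (rv 0) ?R * (- ?P (rv b) (rv a)) - ?P (rv 0) (rv a) * (- ?P (rv b) ?R) + ?P (rv 0) (rv b) * (- ?P (rv a) ?R) = 0"
    by (simp only: an)
  hence "D (Suc n) g * (- ((a - b) * D n (rem a (rem b g)))) - a * D n (rem a g) * (- D (Suc n) (rem b g))
     + b * D n (rem b g) * (- D (Suc n) (rem a g)) = 0"
    by (simp only: r1 r2 r3 r4 r5 r6)
  thus ?thesis by (simp add: algebra_simps)
qed

lemma alg2:
  fixes c :: complex
  assumes "Db = c*Xb" "Da = c*Xa" "D0 = c*X0" "X0a*Xb - X0b*Xa + X0*Xab = 0" "Xab = - Xba"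
  shows "X0a*Db - X0b*Da = Xba*D0"
proof -
  have "X0a*Db - X0b*Da - Xba*D0 = c*(X0a*Xb - X0b*Xa + X0*Xab)"
    using assms(1,2,3,5) by (simp add: algebra_simps)
  thus ?thesis using assms(4) by simp
qed

lemma alg3:
  fixes c :: complex
  assumes "Da = c*Xa" "Db = c*Xb" "D0 = c*XR" "XbR*Xa - Xba*XR + Xb*XRa = 0" "XRa = - XaR"
  shows "XbR*Da - XaR*Db = Xba*D0"
proof -
  have "XbR*Da - XaR*Db - Xba*D0 = c*(XbR*Xa - Xba*XR + Xb*XRa)"
    using assms(1,2,3,5) by (simp add: algebra_simps)
  thus ?thesis using assms(4) by simp
qed

lemma sign_sq: "(-1::complex)^n * (-1)^n = 1"
  by (simp add: power_mult_distrib[symmetric])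

lemma G2:
  assumes supp: "\<And>k. k < 0 \<Longrightarrow> g k = 0"
  shows "a * D (Suc n) (rem a g) * D n (rem b g) - b * D (Suc n) (rem b g) * D n (rem a g)
     = (a - b) * D (Suc n) (rem a (rem b g)) * D n g"
proof -
  define L where "L = (\<lambda>i j. g (int (Suc n) - 2 - 2 * int i + int j))"
  define X where "X = P2 (n+1) (\<lambda>i. if i < n then L i else ev (n+1))"
  define Y where "Y = P2 (n+1) (\<lambda>i. if i < n then L i else ev (n+2))"
  define s where "s = (-1::complex)^n"
  have ss: "s * s = 1" unfolding s_def by (rule sign_sq)
  have row: "L n j = g 0 * ev (n+1) j + g 1 * ev (n+2) j" if "j < n+3" for j
  proof -
    have "j \<le> n \<or> j = n+1 \<or> j = n+2" using that by auto
    thus ?thesis by (auto simp: L_def ev_def supp)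
  qed
  have sp: "P2 (Suc n) L u v = g 0 * X u v + g 1 * Y u v" for u v
    using split_row[of n L "g 0" "g 1" u v, OF row] by (simp add: X_def Y_def)
  have dn: "D n (rem x g) = det (mat (n+1) (n+1) (\<lambda>(i,j). if i = 0 then rv x j else L (i-1) j))" for x
    unfolding rep1 by (simp, rule arg_cong[where f=det], rule mat_cong) (auto simp: L_def rv_def algebra_simps)
  have dY: "D n (rem x g) = s * Y (rv x) (ev (n+1))" for x
    using embedY[of n L "rv x"] ss unfolding dn Y_def s_def[symmetric]
    by (metis (no_types, lifting) mult.assoc mult_1 ss)
  have dX: "D n (rem x g) = (- s) * X (rv x) (ev (n+2))" for x
  proof -
    have "X (rv x) (ev (n+2)) = - (s * D n (rem x g))"
      using embedX[of n L "rv x"] unfolding dn X_def s_def by simp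
    hence "(- s) * X (rv x) (ev (n+2)) = (s * s) * D n (rem x g)" by simp
    thus ?thesis using ss by simp
  qed
  have "D n g = D n (rem 0 g)" by simp
  note d0 = this
  have p0a: "a * D (Suc n) (rem a g) = P2 (Suc n) L (rv 0) (rv a)" using rep2[of "Suc n" g 0 a] by (simp add: L_def)
  have p0b: "b * D (Suc n) (rem b g) = P2 (Suc n) L (rv 0) (rv b)" using rep2[of "Suc n" g 0 b] by (simp add: L_def)
  have pba: "(a - b) * D (Suc n) (rem a (rem b g)) = P2 (Suc n) L (rv b) (rv a)" using rep2[of "Suc n" g b a] by (simp add: L_def)
  have hX: "X (rv 0) (rv a) * D n (rem b g) - X (rv 0) (rv b) * D n (rem a g) = X (rv b) (rv a) * D n (rem 0 g)"
    using alg2[OF dX[of b, unfolded X_def] dX[of a, unfolded X_def] dX[of 0, unfolded X_def] pluecker P2_antisym] unfolding X_def .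
  have hY: "Y (rv 0) (rv a) * D n (rem b g) - Y (rv 0) (rv b) * D n (rem a g) = Y (rv b) (rv a) * D n (rem 0 g)"
    using alg2[OF dY[of b, unfolded Y_def] dY[of a, unfolded Y_def] dY[of 0, unfolded Y_def] pluecker P2_antisym] unfolding Y_def .
  have "a * D (Suc n) (rem a g) * D n (rem b g) - b * D (Suc n) (rem b g) * D n (rem a g)
      = g 0 * (X (rv 0) (rv a) * D n (rem b g) - X (rv 0) (rv b) * D n (rem a g))
        + g 1 * (Y (rv 0) (rv a) * D n (rem b g) - Y (rv 0) (rv b) * D n (rem a g))"
    unfolding p0a p0b sp by (simp add: algebra_simps)
  also have "\<dots> = (a - b) * D (Suc n) (rem a (rem b g)) * D n g"
    unfolding hX hY pba sp by (simp add: algebra_simps)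
  finally show ?thesis .
qed

lemma G3:
  assumes supp: "\<And>k. k < 0 \<Longrightarrow> g k = 0"
  shows "D (Suc (Suc m)) (rem b g) * D m (rem a g) - D (Suc (Suc m)) (rem a g) * D m (rem b g)
     = (a - b) * D (Suc m) (rem a (rem b g)) * D (Suc m) g"
proof -
  define L where "L = (\<lambda>i j. g (int (Suc m) - 2 - 2 * int i + int j))"
  define R where "R = (\<lambda>j. g (int (Suc m) + int j))"
  define X where "X = P2 (m+1) (\<lambda>i. if i < m then L i else ev (m+1))"
  define Y where "Y = P2 (m+1) (\<lambda>i. if i < m then L i else ev (m+2))"
  define s where "s = (-1::complex)^m"
  have ss: "s * s = 1" unfolding s_def by (rule sign_sq)
  have row: "L m j = g 0 * ev (m+1) j + g 1 * ev (m+2) j" if "j < m+3" for j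
  proof -
    have "j \<le> m \<or> j = m+1 \<or> j = m+2" using that by auto
    thus ?thesis by (auto simp: L_def ev_def supp)
  qed
  have sp: "P2 (Suc m) L u v = g 0 * X u v + g 1 * Y u v" for u v
    using split_row[of m L "g 0" "g 1" u v, OF row] by (simp add: X_def Y_def)
  have dm: "D m (rem x g) = det (mat (m+1) (m+1) (\<lambda>(i,j). if i = 0 then rv x j else L (i-1) j))" for x
    unfolding rep1 by (simp, rule arg_cong[where f=det], rule mat_cong) (auto simp: L_def rv_def algebra_simps)
  have dg: "D (Suc m) g = det (mat (m+1) (m+1) (\<lambda>(i,j). if i = 0 then R j else L (i-1) j))"
    unfolding D_def by (simp, rule arg_cong[where f=det], rule mat_cong) (auto simp: L_def R_def algebra_simps)
  have conv: "z = - (s * d) \<Longrightarrow> d = (- s) * z" "z = s * d \<Longrightarrow> d = s * z" for z d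
    using ss by (auto simp: algebra_simps)
  have dX: "D m (rem x g) = (- s) * X (rv x) (ev (m+2))" for x
    by (rule conv(1)) (use embedX[of m L "rv x"] in \<open>simp add: dm X_def s_def\<close>)
  have dY: "D m (rem x g) = s * Y (rv x) (ev (m+1))" for x
    by (rule conv(2)) (use embedY[of m L "rv x"] in \<open>simp add: dm Y_def s_def\<close>)
  have dXR: "D (Suc m) g = (- s) * X R (ev (m+2))"
    by (rule conv(1)) (use embedX[of m L R] in \<open>simp add: dg X_def s_def\<close>)
  have dYR: "D (Suc m) g = s * Y R (ev (m+1))"
    by (rule conv(2)) (use embedY[of m L R] in \<open>simp add: dg Y_def s_def\<close>)
  have p1: "P2 (Suc m) L (rv y) R = D (Suc (Suc m)) (rem y g)" for y
    using rep3[of "Suc m" g y] by (simp add: L_def R_def)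
  have pba: "P2 (Suc m) L (rv b) (rv a) = (a - b) * D (Suc m) (rem a (rem b g))"
    using rep2[of "Suc m" g b a] by (simp add: L_def)
  have hX: "X (rv b) R * D m (rem a g) - X (rv a) R * D m (rem b g) = X (rv b) (rv a) * D (Suc m) g"
    using alg3[OF dX[of a, unfolded X_def] dX[of b, unfolded X_def] dXR[unfolded X_def] pluecker P2_antisym] unfolding X_def .
  have hY: "Y (rv b) R * D m (rem a g) - Y (rv a) R * D m (rem b g) = Y (rv b) (rv a) * D (Suc m) g"
    using alg3[OF dY[of a, unfolded Y_def] dY[of b, unfolded Y_def] dYR[unfolded Y_def] pluecker P2_antisym] unfolding Y_def .
  have "D (Suc (Suc m)) (rem b g) * D m (rem a g) - D (Suc (Suc m)) (rem a g) * D m (rem b g)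
      = g 0 * (X (rv b) R * D m (rem a g) - X (rv a) R * D m (rem b g))
        + g 1 * (Y (rv b) R * D m (rem a g) - Y (rv a) R * D m (rem b g))"
    unfolding p1[symmetric] sp by (simp add: algebra_simps)
  also have "\<dots> = (a - b) * D (Suc m) (rem a (rem b g)) * D (Suc m) g"
    unfolding hX hY pba[symmetric] sp by (simp add: algebra_simps)
  finally show ?thesis .
qed


lemma det_rc:
  fixes r c :: "nat \<Rightarrow> 'a::comm_ring_1"
  shows "det (mat n n (\<lambda>(i,j). r i * B i j * c j)) = prod r {0..<n} * prod c {0..<n} * det (mat n n (\<lambda>(i,j). B i j))"
proof -
  have e1: "mat n n (\<lambda>(i,j). r i * B i j * c j) = mat\<^sub>r n n (\<lambda>i. r i \<cdot>\<^sub>v vec n (\<lambda>j. B i j * c j))"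
    by (rule eq_matI) auto
  have e2: "mat\<^sub>r n n (\<lambda>i. vec n (\<lambda>j. B i j * c j)) = transpose_mat (mat n n (\<lambda>(i,j). c i * B j i))"
    by (rule eq_matI) auto
  have e3: "mat n n (\<lambda>(i,j). c i * B j i) = mat\<^sub>r n n (\<lambda>i. c i \<cdot>\<^sub>v vec n (\<lambda>j. B j i))"
    by (rule eq_matI) auto
  have e4: "mat\<^sub>r n n (\<lambda>i. vec n (\<lambda>j. B j i)) = transpose_mat (mat n n (\<lambda>(i,j). B i j))"
    by (rule eq_matI) auto
  have "det (mat n n (\<lambda>(i,j). r i * B i j * c j)) = prod r {0..<n} * det (mat\<^sub>r n n (\<lambda>i. vec n (\<lambda>j. B i j * c j)))"
    unfolding e1 by (rule det_rows_mul) auto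
  also have "det (mat\<^sub>r n n (\<lambda>i. vec n (\<lambda>j. B i j * c j))) = det (mat n n (\<lambda>(i,j). c i * B j i))"
    unfolding e2 by (rule det_transpose) auto
  also have "\<dots> = prod c {0..<n} * det (mat\<^sub>r n n (\<lambda>i. vec n (\<lambda>j. B j i)))"
    unfolding e3 by (rule det_rows_mul) auto
  also have "det (mat\<^sub>r n n (\<lambda>i. vec n (\<lambda>j. B j i))) = det (mat n n (\<lambda>(i,j). B i j))"
    unfolding e4 by (rule det_transpose) auto
  finally show ?thesis by (simp add: algebra_simps)
qed

definition sc :: "complex \<Rightarrow> (int \<Rightarrow> complex) \<Rightarrow> int \<Rightarrow> complex" where
  "sc q g k = q powi k * g k"

lemma prod_powi:
  assumes "(q::complex) \<noteq> 0" shows "(\<Prod>i\<in>{0..<(n::nat)}. q powi f i) = q powi (\<Sum>i\<in>{0..<n}. f i)"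
  using assms by (induct n) (auto simp: power_int_add)

lemma sum_int_id: "(\<Sum>i\<in>{0..<n}. int i) * 2 = int n * (int n - 1)"
  by (induct n) (auto simp: algebra_simps)

lemma D_sc:
  assumes q: "q \<noteq> 0"
  shows "D n (sc q g) = q ^ (n * (n+1) div 2) * D n g"
proof -
  have "D n (sc q g) = det (mat n n (\<lambda>(i,j). q powi (int n - 2 * int i) * g (int n - 2 * int i + int j) * q powi (int j)))"
    unfolding D_def sc_def by (rule arg_cong[where f=det], rule mat_cong) (auto simp: power_int_add q)
  also have "\<dots> = (\<Prod>i\<in>{0..<n}. q powi (int n - 2 * int i)) * (\<Prod>j\<in>{0..<n}. q powi (int j)) * D n g"
    unfolding D_def by (rule det_rc)
  also have "(\<Prod>i\<in>{0..<n}. q powi (int n - 2 * int i)) * (\<Prod>j\<in>{0..<n}. q powi (int j))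
     = q powi (\<Sum>i\<in>{0..<n}. (int n - 2 * int i)) * q powi (\<Sum>i\<in>{0..<n}. int i)"
    by (simp only: prod_powi[OF q])
  also have "\<dots> = q powi ((\<Sum>i\<in>{0..<n}. (int n - 2 * int i)) + (\<Sum>i\<in>{0..<n}. int i))"
    by (rule power_int_add[symmetric]) (simp add: q)
  also have "(\<Sum>i\<in>{0..<n}. (int n - 2 * int i)) + (\<Sum>i\<in>{0..<n}. int i) = int (n * (n+1) div 2)"
  proof -
    have "(\<Sum>i\<in>{0..<n}. (int n - 2 * int i)) = int n * int n - 2 * (\<Sum>i\<in>{0..<n}. int i)"
      by (simp add: sum_subtractf sum_distrib_left)
    moreover have "int (n * (n+1) div 2) * 2 = int n * (int n + 1)"
    proof -
      have "even (n * (n+1))" by simp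
      hence "n * (n+1) div 2 * 2 = n * (n+1)" by simp
      hence "int (n * (n+1) div 2) * 2 = int (n * (n+1))" by (metis of_nat_mult of_nat_numeral)
      thus ?thesis by (simp add: algebra_simps)
    qed
    ultimately show ?thesis using sum_int_id[of n] by (simp add: algebra_simps)
  qed
  finally show ?thesis by (simp add: power_int_of_nat)
qed

lemma rem_sc: "q \<noteq> 0 \<Longrightarrow> rem (q * c) (sc q f) = sc q (rem c f)"
  by (rule ext) (simp add: rem_def sc_def algebra_simps power_int_diff)

lemma nth_1mX: fixes c :: complex shows "fps_nth ((1 - fps_const c * fps_X) * F) n = (if n = 0 then fps_nth F 0 else fps_nth F n - c * fps_nth F (n - 1))"
proof -
  have "(1 - fps_const c * fps_X) * F = F - fps_const c * (fps_X * F)" by (simp only: left_diff_distrib mult.assoc mult.left_neutral)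
  thus ?thesis by (simp add: fps_X_mult_nth)
qed

definition seqf :: "complex fps \<Rightarrow> int \<Rightarrow> complex" where
  "seqf F k = (if k < 0 then 0 else fps_nth F (nat k))"

definition fsc :: "complex \<Rightarrow> complex fps \<Rightarrow> complex fps" where
  "fsc q F = Abs_fps (\<lambda>n. q ^ n * fps_nth F n)"

lemma seq_rem: "seqf ((1 - fps_const c * fps_X) * F) = rem c (seqf F)"
proof (rule ext)
  fix k :: int
  show "seqf ((1 - fps_const c * fps_X) * F) k = rem c (seqf F) k"
  proof (cases "k < 0")
    case True thus ?thesis by (simp add: seqf_def rem_def)
  next
    case False
    hence "k = 0 \<or> k > 0" by auto
    thus ?thesis
    proof
      assume "k = 0" thus ?thesis by (simp add: seqf_def rem_def nth_1mX)
    next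
      assume k: "k > 0"
      have "nat (k - 1) = nat k - 1" by simp
      thus ?thesis using k by (simp add: seqf_def rem_def nth_1mX)
    qed
  qed
qed

lemma seq_fsc: "seqf (fsc q F) = sc q (seqf F)"
proof (rule ext)
  fix k :: int
  show "seqf (fsc q F) k = sc q (seqf F) k"
  proof (cases "k < 0")
    case True thus ?thesis by (simp add: seqf_def sc_def)
  next
    case False
    hence "k = int (nat k)" by simp
    hence "q powi k = q ^ nat k" by (metis power_int_of_nat)
    thus ?thesis using False by (simp add: seqf_def sc_def fsc_def)
  qed
qed

lemma fsc_mult: "fsc q (A * B) = fsc q A * fsc q B"
proof (rule fps_ext)
  fix n
  have "fps_nth (fsc q (A * B)) n = (\<Sum>i = 0..n. q ^ n * (fps_nth A i * fps_nth B (n - i)))"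
    by (simp add: fsc_def fps_mult_nth sum_distrib_left)
  also have "\<dots> = (\<Sum>i = 0..n. (q ^ i * fps_nth A i) * (q ^ (n - i) * fps_nth B (n - i)))"
  proof (rule sum.cong[OF refl])
    fix i assume "i \<in> {0..n}"
    hence "q ^ n = q ^ i * q ^ (n - i)" by (simp add: power_add[symmetric])
    thus "q ^ n * (fps_nth A i * fps_nth B (n - i)) = (q ^ i * fps_nth A i) * (q ^ (n - i) * fps_nth B (n - i))"
      by (simp add: algebra_simps)
  qed
  also have "\<dots> = fps_nth (fsc q A * fsc q B) n" by (simp add: fsc_def fps_mult_nth)
  finally show "fps_nth (fsc q (A * B)) n = fps_nth (fsc q A * fsc q B) n" .
qed

definition UU :: "complex \<Rightarrow> complex \<Rightarrow> complex fps" where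
  "UU q x = Abs_fps (\<lambda>a. ((1-q)*x)^a / qpoch q a)"

definition WW :: "complex \<Rightarrow> complex fps" where
  "WW q = Abs_fps (\<lambda>c. (1-q)^c * q^(c*(c-1) div 2) / qpoch q c)"

definition PS :: "complex \<Rightarrow> complex \<Rightarrow> complex \<Rightarrow> complex fps" where
  "PS q y z = UU q y * UU q z * WW q"

lemma fsc_UU: "fsc q (UU q x) = UU q (q * x)"
proof (rule fps_ext)
  fix n
  have "((1-q)*(q*x))^n = q^n * ((1-q)*x)^n" by (simp add: power_mult_distrib mult_ac)
  thus "fps_nth (fsc q (UU q x)) n = fps_nth (UU q (q*x)) n" by (simp add: fsc_def UU_def)
qed

lemma qpoch_Suc: "qpoch q (Suc m) = qpoch q m * (1 - q ^ Suc m)"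
  unfolding qpoch_def by (simp add: prod.nat_ivl_Suc')

lemma qpoch_0[simp]: "qpoch q 0 = 1" unfolding qpoch_def by simp

lemma qpoch_nz:
  assumes "\<forall>n::nat. n > 0 \<longrightarrow> q ^ n \<noteq> 1"
  shows "qpoch q m \<noteq> 0"
  unfolding qpoch_def using assms by (auto simp: prod_zero_iff)

lemma Urec:
  assumes qr: "\<forall>n::nat. n > 0 \<longrightarrow> q ^ n \<noteq> 1"
  shows "(1 - fps_const ((1-q)*x) * fps_X) * UU q x = UU q (q * x)"
proof (rule fps_ext)
  fix n
  show "fps_nth ((1 - fps_const ((1-q)*x) * fps_X) * UU q x) n = fps_nth (UU q (q * x)) n"
  proof (cases n)
    case 0 thus ?thesis by (simp add: nth_1mX UU_def)
  next
    case (Suc m)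
    have p: "qpoch q m \<noteq> 0" by (rule qpoch_nz[OF qr])
    have s: "1 - q ^ Suc m \<noteq> 0" using qr by auto
    define t where "t = (1-q)*x"
    have l: "fps_nth ((1 - fps_const ((1-q)*x) * fps_X) * UU q x) n = (t * t^m)/(qpoch q m * (1 - q^Suc m)) - t * (t^m / qpoch q m)"
      unfolding Suc nth_1mX by (simp add: UU_def qpoch_Suc t_def)
    have r: "fps_nth (UU q (q * x)) n = (q^Suc m * (t * t^m))/(qpoch q m * (1 - q^Suc m))"
    proof -
      have "((1-q)*(q*x))^Suc m = q^Suc m * (t * t^m)" by (simp add: t_def power_mult_distrib mult_ac)
      thus ?thesis unfolding Suc by (simp add: UU_def qpoch_Suc)
    qed
    have a: "A \<noteq> 0 \<Longrightarrow> B \<noteq> 0 \<Longrightarrow> (T::complex)/(A*B) - T/A = ((1-B)*T)/(A*B)" for A B T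
      by (simp add: field_simps)
    have "(t * t^m)/(qpoch q m * (1 - q^Suc m)) - t * (t^m / qpoch q m) = ((1 - (1 - q^Suc m)) * (t*t^m))/(qpoch q m * (1 - q^Suc m))"
      using a[OF p s, of "t*t^m"] by simp
    thus ?thesis unfolding l r by simp
  qed
qed

lemma tri_Suc: "Suc m * m div 2 = m * (m - 1) div 2 + m"
proof (cases m)
  case 0 thus ?thesis by simp
next
  case (Suc k)
  have "Suc m * m = Suc k * k + 2 * Suc k" using Suc by simp
  hence "Suc m * m div 2 = Suc k * k div 2 + Suc k" by simp
  thus ?thesis using Suc by simp
qed

lemma Wrec:
  assumes qr: "\<forall>n::nat. n > 0 \<longrightarrow> q ^ n \<noteq> 1"
  shows "(1 - fps_const (-(1-q)) * fps_X) * fsc q (WW q) = WW q"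
proof (rule fps_ext)
  fix n
  show "fps_nth ((1 - fps_const (-(1-q)) * fps_X) * fsc q (WW q)) n = fps_nth (WW q) n"
  proof (cases n)
    case 0 thus ?thesis by (simp add: nth_1mX WW_def fsc_def)
  next
    case (Suc m)
    have p: "qpoch q m \<noteq> 0" by (rule qpoch_nz[OF qr])
    have s: "1 - q ^ Suc m \<noteq> 0" using qr by auto
    have e: "q ^ (Suc m * (Suc m - 1) div 2) = q ^ m * q ^ (m * (m - 1) div 2)"
    proof -
      have "Suc m * (Suc m - 1) div 2 = m * (m - 1) div 2 + m" using tri_Suc[of m] by simp
      thus ?thesis by (simp add: power_add)
    qed
    define K where "K = (1-q)^Suc m * q^m * q ^ (m * (m - 1) div 2)"
    define T where "T = m * (m - 1) div 2"
    have w1: "fps_nth (WW q) (Suc m) = K / (qpoch q m * (1 - q^Suc m))"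
    proof -
      have "fps_nth (WW q) (Suc m) = (1-q)^Suc m * q ^ (Suc m * (Suc m - 1) div 2) / qpoch q (Suc m)"
        by (simp only: WW_def fps_nth_Abs_fps)
      also have "\<dots> = K / (qpoch q m * (1 - q^Suc m))"
        by (simp only: e qpoch_Suc K_def mult.assoc)
      finally show ?thesis .
    qed
    have w0: "fps_nth (WW q) m = (1-q)^m * q^T / qpoch q m"
      by (simp only: WW_def fps_nth_Abs_fps T_def)
    have K3: "(1-q) * (q^m * ((1-q)^m * q^T)) = K" by (simp add: K_def T_def)
    have K2: "(1-q) * (q^m * ((1-q)^m * q^T / qpoch q m)) = K / qpoch q m"
    proof -
      have "(1-q) * (q^m * ((1-q)^m * q^T / qpoch q m)) = ((1-q) * (q^m * ((1-q)^m * q^T))) / qpoch q m"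
        by simp
      thus ?thesis unfolding K3 .
    qed
    have l: "fps_nth ((1 - fps_const (-(1-q)) * fps_X) * fsc q (WW q)) n
        = q^Suc m * K / (qpoch q m * (1 - q^Suc m)) + K / qpoch q m"
    proof -
      have "fps_nth ((1 - fps_const (-(1-q)) * fps_X) * fsc q (WW q)) n
         = q^Suc m * fps_nth (WW q) (Suc m) - (-(1-q)) * (q^m * fps_nth (WW q) m)"
        unfolding Suc nth_1mX by (simp add: fsc_def)
      also have "\<dots> = q^Suc m * fps_nth (WW q) (Suc m) + (1-q) * (q^m * fps_nth (WW q) m)"
        by (simp only: mult_minus_left diff_minus_eq_add)
      also have "\<dots> = q^Suc m * K / (qpoch q m * (1 - q^Suc m)) + K / qpoch q m"
        unfolding w1 w0 K2 by (simp only: times_divide_eq_right)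
      finally show ?thesis .
    qed
    have r: "fps_nth (WW q) n = K / (qpoch q m * (1 - q^Suc m))"
      unfolding Suc by (rule w1)
    have a: "A \<noteq> 0 \<Longrightarrow> B \<noteq> 0 \<Longrightarrow> (1-B)*T/(A*B) + T/A = (T::complex)/(A*B)" for A B T
      by (simp add: field_simps)
    show ?thesis unfolding l r using a[OF p s, of K] by simp
  qed
qed

lemma pp_seq: "pp q k y z = seqf (PS q y z) k"
proof (cases "k < 0")
  case True thus ?thesis by (simp add: pp_def seqf_def)
next
  case False
  define n where "n = nat k"
  define U where "U x a = ((1-q)*x)^a / qpoch q a" for x a
  define Wc where "Wc c = (1-q)^c * q^(c*(c-1) div 2) / qpoch q c" for c
  have "seqf (PS q y z) k = fps_nth (PS q y z) n" using False by (simp add: seqf_def n_def)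
  also have "\<dots> = (\<Sum>i=0..n. (\<Sum>a=0..i. U y a * U z (i-a)) * Wc (n-i))"
    by (simp add: PS_def fps_mult_nth UU_def WW_def U_def Wc_def)
  also have "\<dots> = (\<Sum>i=0..n. \<Sum>a=0..i. U y a * U z (i-a) * Wc (n-i))" by (simp add: sum_distrib_right)
  also have "\<dots> = (\<Sum>(i,a)\<in>Sigma {0..n} (\<lambda>i. {0..i}). U y a * U z (i-a) * Wc (n-i))"
    by (rule sum.Sigma) auto
  also have "\<dots> = (\<Sum>(a,b)\<in>{(a,b). a+b \<le> n}. U y a * U z b * Wc (n-a-b))"
    by (rule sum.reindex_bij_witness[where i="\<lambda>(a,b). (a+b, a)" and j="\<lambda>(i,a). (a, i-a)"]) auto
  also have "\<dots> = (\<Sum>(a,b)\<in>{(a,b). a+b \<le> n}. (1-q)^n * (let c = n-a-b in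
        y^a * z^b * q^(c*(c-1) div 2) / (qpoch q a * qpoch q b * qpoch q c)))"
  proof (rule sum.cong[OF refl])
    fix p assume "p \<in> {(a,b). a+b \<le> n}"
    then obtain a b where p: "p = (a,b)" "a+b \<le> n" by auto
    define c where "c = n - a - b"
    have e: "(1-q)^n = (1-q)^a * (1-q)^b * (1-q)^c" using p by (simp add: power_add[symmetric] c_def)
    have "U y a * U z b * Wc c = ((1-q)^a * (1-q)^b * (1-q)^c) * (y^a * z^b * q^(c*(c-1) div 2)) / (qpoch q a * qpoch q b * qpoch q c)"
      by (simp add: U_def Wc_def power_mult_distrib mult_ac)
    thus "(case p of (a,b) \<Rightarrow> U y a * U z b * Wc (n-a-b)) = (case p of (a,b) \<Rightarrow> (1-q)^n * (let c = n-a-b in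
        y^a * z^b * q^(c*(c-1) div 2) / (qpoch q a * qpoch q b * qpoch q c)))"
      using p unfolding e by (simp add: Let_def c_def)
  qed
  also have "\<dots> = pp q k y z"
    using False by (simp add: pp_def n_def sum_distrib_left case_prod_unfold)
  finally show ?thesis ..
qed

lemma phi_nat_D: "phi_nat q n y z = D n (seqf (PS q y z))"
proof (cases "n = 0")
  case True thus ?thesis by (simp add: phi_nat_def D_def)
next
  case False
  hence "phi_nat q n y z = det (mat n n (\<lambda>(i, j). pp q (int n - 2 * (int i + 1) + (int j + 1) + 1) y z))"
    by (simp add: phi_nat_def)
  also have "\<dots> = D n (seqf (PS q y z))"
    unfolding D_def by (rule arg_cong[where f=det], rule mat_cong) (auto simp: pp_seq algebra_simps)
  finally show ?thesis .
qed

definition FF :: "complex \<Rightarrow> complex \<Rightarrow> complex \<Rightarrow> int \<Rightarrow> complex" where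
  "FF q y z = seqf (PS q y z)"

lemma FF_supp: "k < 0 \<Longrightarrow> FF q y z k = 0" by (simp add: FF_def seqf_def)

lemma sc_supp: "(\<And>k. k < 0 \<Longrightarrow> f k = 0) \<Longrightarrow> k < 0 \<Longrightarrow> sc q f k = 0" by (simp add: sc_def)

lemma FF0: "FF q y z 0 = 1"
  by (simp add: FF_def seqf_def PS_def UU_def WW_def)

lemma FF1: assumes "q \<noteq> 1" shows "FF q y z 1 = 1 + y + z"
proof -
  have nz: "1 - q \<noteq> 0" using assms by simp
  have u1: "fps_nth (UU q x) (Suc 0) = x" for x using nz by (simp add: UU_def qpoch_def)
  have u0: "fps_nth (UU q x) 0 = 1" for x by (simp add: UU_def)
  have w1: "fps_nth (WW q) (Suc 0) = 1" using nz by (simp add: WW_def qpoch_def)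
  have w0: "fps_nth (WW q) 0 = 1" by (simp add: WW_def)
  show ?thesis by (simp add: FF_def seqf_def PS_def fps_mult_nth_1' u1 u0 w1 w0)
qed

context
  fixes q :: complex
  assumes q: "q \<noteq> 0" and qr: "\<forall>n::nat. n > 0 \<longrightarrow> q ^ n \<noteq> 1"
begin

lemma S1: "rem ((1-q)*(y/q)) (FF q (y/q) z) = FF q y z"
proof -
  have u: "(1 - fps_const ((1-q)*(y/q)) * fps_X) * UU q (y/q) = UU q y" using Urec[OF qr, of "y/q"] q by simp
  have "(1 - fps_const ((1-q)*(y/q)) * fps_X) * PS q (y/q) z = PS q y z"
    unfolding PS_def by (simp add: u[symmetric] mult.assoc)
  thus ?thesis unfolding FF_def seq_rem[symmetric] by simp
qed

lemma S2: "rem ((1-q)*(z/q)) (FF q y (z/q)) = FF q y z"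
proof -
  have u: "(1 - fps_const ((1-q)*(z/q)) * fps_X) * UU q (z/q) = UU q z" using Urec[OF qr, of "z/q"] q by simp
  have "(1 - fps_const ((1-q)*(z/q)) * fps_X) * PS q y (z/q) = PS q y z"
    unfolding PS_def by (simp add: u[symmetric] mult_ac)
  thus ?thesis unfolding FF_def seq_rem[symmetric] by simp
qed

lemma S2': "rem ((1-q)*z) (FF q y z) = FF q y (q*z)"
proof -
  have u: "(1 - fps_const ((1-q)*z) * fps_X) * UU q z = UU q (q*z)" using Urec[OF qr, of z] by simp
  have "(1 - fps_const ((1-q)*z) * fps_X) * PS q y z = PS q y (q*z)"
    unfolding PS_def by (simp add: u[symmetric] mult_ac)
  thus ?thesis unfolding FF_def seq_rem[symmetric] by simp
qed

lemma S3: "rem (-(1-q)) (sc q (FF q y z)) = FF q (q*y) (q*z)"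
proof -
  have "sc q (FF q y z) = seqf (UU q (q*y) * UU q (q*z) * fsc q (WW q))"
    unfolding FF_def seq_fsc[symmetric] PS_def fsc_mult fsc_UU ..
  moreover have "(1 - fps_const (-(1-q)) * fps_X) * (UU q (q*y) * UU q (q*z) * fsc q (WW q)) = PS q (q*y) (q*z)"
    unfolding PS_def using Wrec[OF qr] by (simp add: mult_ac)
  moreover have "rem (-(1-q)) (seqf (UU q (q*y) * UU q (q*z) * fsc q (WW q))) =
     seqf ((1 - fps_const (-(1-q)) * fps_X) * (UU q (q*y) * UU q (q*z) * fsc q (WW q)))"
    by (rule seq_rem[symmetric])
  ultimately show ?thesis unfolding FF_def by simp
qed

end


context
  fixes q :: complex
  assumes q: "q \<noteq> 0" and qr: "\<forall>n::nat. n > 0 \<longrightarrow> q ^ n \<noteq> 1"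
begin

lemma q1: "q \<noteq> 1" using qr[rule_format, of 1] by simp

lemma q1': "1 - q \<noteq> 0" using q1 by simp

lemma frame_g:
  fixes y z :: complex
  shows fg1: "rem (-(1-q)) (sc q (FF q (y/q) (z/q))) = FF q y z"
    and fg2: "rem ((1-q)*z) (sc q (FF q (y/q) (z/q))) = sc q (FF q (y/q) z)"
    and fg3: "rem ((1-q)*z) (rem (-(1-q)) (sc q (FF q (y/q) (z/q)))) = FF q y (q*z)"
    and fg4: "\<And>k. k < 0 \<Longrightarrow> sc q (FF q (y/q) (z/q)) k = 0"
proof -
  show "rem (-(1-q)) (sc q (FF q (y/q) (z/q))) = FF q y z" using S3[OF q qr, of "y/q" "z/q"] q by simp
  have "(1-q)*z = q * ((1-q)*(z/q))" using q by simp
  thus "rem ((1-q)*z) (sc q (FF q (y/q) (z/q))) = sc q (FF q (y/q) z)"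
    using rem_sc[OF q, of "(1-q)*(z/q)"] S2[OF q qr, where y="y/q" and z=z] by simp
  show "rem ((1-q)*z) (rem (-(1-q)) (sc q (FF q (y/q) (z/q)))) = FF q y (q*z)"
    using S3[OF q qr, of "y/q" "z/q"] S2'[OF q qr, where y=y and z=z] q by simp
  show "\<And>k. k < 0 \<Longrightarrow> sc q (FF q (y/q) (z/q)) k = 0" by (rule sc_supp) (auto simp: FF_supp)
qed

lemma canc3:
  fixes X1 Y1 X2 Y2 X3 Y3 Q z :: complex
  assumes "Q \<noteq> 0" and "(1-q)*z*X1*(Q*Y1) + (1-q)*(Q*q^m*X2)*Y2 = ((1-q)*(1+z))*(Q*q^m*X3)*Y3"
  shows "z / q^m * X1 * Y1 + X2 * Y2 = (1+z)*X3*Y3"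
proof -
  have e: "((1-q)*Q*q^m) * (z / q^m * X1 * Y1 + X2 * Y2) = (1-q)*z*X1*(Q*Y1) + (1-q)*(Q*q^m*X2)*Y2"
    using q by (simp add: field_simps)
  have f: "((1-q)*Q*q^m) * ((1+z)*X3*Y3) = ((1-q)*(1+z))*(Q*q^m*X3)*Y3" by (simp add: algebra_simps)
  have "((1-q)*Q*q^m) * (z / q^m * X1 * Y1 + X2 * Y2) = ((1-q)*Q*q^m) * ((1+z)*X3*Y3)"
    unfolding e f by (rule assms(2))
  moreover have "(1-q)*Q*q^m \<noteq> 0" using q q1' assms(1) by simp
  ultimately show ?thesis using mult_left_cancel by blast
qed

abbreviation "A n y z \<equiv> D n (FF q y z)"

lemma I1: "y * A (Suc n) (y/q) z * A n y (z/q) - z * A (Suc n) y (z/q) * A n (y/q) z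
    = (y - z) * A (Suc n) (y/q) (z/q) * A n y z"
proof -
  define c where "c = (1-q)/q"
  have c: "c \<noteq> 0" using q q1' by (simp add: c_def)
  have ra: "rem (c*y) (FF q (y/q) (z/q)) = FF q y (z/q)" using S1[OF q qr, of y "z/q"] by (simp add: c_def)
  have rb: "rem (c*z) (FF q (y/q) (z/q)) = FF q (y/q) z" using S2[OF q qr, where y="y/q" and z=z] by (simp add: c_def)
  have rab: "rem (c*y) (FF q (y/q) z) = FF q y z" using S1[OF q qr, of y z] by (simp add: c_def)
  have "(c*y) * A (Suc n) (y/q) z * A n y (z/q) - (c*z) * A (Suc n) y (z/q) * A n (y/q) z
      = (c*y - c*z) * A (Suc n) (y/q) (z/q) * A n y z"
    using G1[of "c*y" n "c*z" "FF q (y/q) (z/q)"] unfolding ra rb rab .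
  hence "c * (y * A (Suc n) (y/q) z * A n y (z/q) - z * A (Suc n) y (z/q) * A n (y/q) z)
      = c * ((y - z) * A (Suc n) (y/q) (z/q) * A n y z)" by (simp add: algebra_simps)
  thus ?thesis using c by simp
qed

lemma I2: "y * A (Suc n) y (z/q) * A n (y/q) z - z * A (Suc n) (y/q) z * A n y (z/q)
    = (y - z) * A (Suc n) y z * A n (y/q) (z/q)"
proof -
  define c where "c = (1-q)/q"
  have c: "c \<noteq> 0" using q q1' by (simp add: c_def)
  have ra: "rem (c*y) (FF q (y/q) (z/q)) = FF q y (z/q)" using S1[OF q qr, of y "z/q"] by (simp add: c_def)
  have rb: "rem (c*z) (FF q (y/q) (z/q)) = FF q (y/q) z" using S2[OF q qr, where y="y/q" and z=z] by (simp add: c_def)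
  have rab: "rem (c*y) (FF q (y/q) z) = FF q y z" using S1[OF q qr, of y z] by (simp add: c_def)
  have "(c*y) * A (Suc n) y (z/q) * A n (y/q) z - (c*z) * A (Suc n) (y/q) z * A n y (z/q)
      = (c*y - c*z) * A (Suc n) y z * A n (y/q) (z/q)"
    using G2[of "FF q (y/q) (z/q)" "c*y" n "c*z", OF FF_supp] unfolding ra rb rab .
  hence "c * (y * A (Suc n) y (z/q) * A n (y/q) z - z * A (Suc n) (y/q) z * A n y (z/q))
      = c * ((y - z) * A (Suc n) y z * A n (y/q) (z/q))" by (simp add: algebra_simps)
  thus ?thesis using c by simp
qed

lemma tri2: "Suc n * (Suc n + 1) div 2 = n * (n+1) div 2 + Suc n" by simp


lemma I3:
  fixes y z :: complex and n :: nat
  shows "q powi (- int n - 1) * z * A (Suc n) y z * A n (y/q) z + A (Suc n) (y/q) z * A n y z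
    = (1 + z) * A (Suc n) (y/q) (z/q) * A n y (q*z)"
proof -
  define Q where "Q = q ^ (n * (n+1) div 2)"
  have Q: "Q \<noteq> 0" using q by (simp add: Q_def)
  have sn1: "q ^ (Suc n * (Suc n + 1) div 2) = Q * q ^ Suc n" unfolding tri2 Q_def by (simp add: power_add)
  have "((1-q)*z) * D (Suc n) (FF q y z) * D n (sc q (FF q (y/q) z))
      - (-(1-q)) * D (Suc n) (sc q (FF q (y/q) z)) * D n (FF q y z)
      = ((1-q)*z - (-(1-q))) * D (Suc n) (sc q (FF q (y/q) (z/q))) * D n (FF q y (q*z))"
    using G1[of "(1-q)*z" n "-(1-q)" "sc q (FF q (y/q) (z/q))"] unfolding fg1 fg2 S2'[OF q qr, where y=y and z=z] .
  hence "((1-q)*z) * A (Suc n) y z * (Q * A n (y/q) z) + (1-q) * (Q * q ^ Suc n * A (Suc n) (y/q) z) * A n y z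
      = ((1-q) * (1 + z)) * (Q * q ^ Suc n * A (Suc n) (y/q) (z/q)) * A n y (q*z)"
    unfolding D_sc[OF q] sn1 Q_def[symmetric] by (simp add: algebra_simps)
  hence "z / q ^ Suc n * A (Suc n) y z * A n (y/q) z + A (Suc n) (y/q) z * A n y z
      = (1 + z) * A (Suc n) (y/q) (z/q) * A n y (q*z)"
    by (rule canc3[OF Q])
  moreover have "q powi (- int n - 1) = 1 / q ^ Suc n"
    using q by (simp add: power_int_diff power_int_minus_divide)
  ultimately show ?thesis by simp
qed


lemma canc4:
  fixes X1 Y1 X2 Y2 X3 Y3 Q z :: complex
  assumes "Q \<noteq> 0" and "(1-q)*z*(Q*q^m*X1)*Y1 + (1-q)*X2*(Q*Y2) = ((1-q)*(1+z))*X3*(Q*Y3)"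
  shows "q^m*z*X1*Y1 + X2*Y2 = (1+z)*X3*Y3"
proof -
  have "((1-q)*Q) * (q^m*z*X1*Y1 + X2*Y2) = ((1-q)*Q) * ((1+z)*X3*Y3)"
    using assms(2) by (simp add: algebra_simps)
  moreover have "(1-q)*Q \<noteq> 0" using q1' assms(1) by simp
  ultimately show ?thesis using mult_left_cancel by blast
qed

lemma I3':
  fixes y z :: complex and m :: nat
  shows "q^(Suc m) * z * A (Suc m) (y/q) z * A m y z + A (Suc m) y z * A m (y/q) z
    = (1 + z) * A (Suc m) y (q*z) * A m (y/q) (z/q)"
proof -
  define Q where "Q = q ^ (m * (m+1) div 2)"
  have Q: "Q \<noteq> 0" using q by (simp add: Q_def)
  have sn1: "q ^ (Suc m * (Suc m + 1) div 2) = Q * q ^ Suc m" unfolding tri2 Q_def by (simp add: power_add)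
  have "((1-q)*z) * D (Suc m) (sc q (FF q (y/q) z)) * D m (FF q y z)
      - (-(1-q)) * D (Suc m) (FF q y z) * D m (sc q (FF q (y/q) z))
      = ((1-q)*z - (-(1-q))) * D (Suc m) (FF q y (q*z)) * D m (sc q (FF q (y/q) (z/q)))"
    using G2[where g="sc q (FF q (y/q) (z/q))" and a="(1-q)*z" and b="-(1-q)" and n=m, OF fg4]
    unfolding fg1 fg2 S2'[OF q qr, where y=y and z=z] .
  hence "(1-q)*z*(Q*q^Suc m*A (Suc m) (y/q) z)*A m y z + (1-q)*A (Suc m) y z*(Q*A m (y/q) z)
      = ((1-q)*(1+z))*A (Suc m) y (q*z)*(Q*A m (y/q) (z/q))"
    unfolding D_sc[OF q] sn1 Q_def[symmetric] by (simp add: algebra_simps)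
  thus ?thesis by (rule canc4[OF Q])
qed

lemma I4:
  fixes y z :: complex and m :: nat
  shows "A (Suc (Suc m)) (y/q) z * A m y z - A (Suc (Suc m)) y z * A m (y/q) z
    = (1-q)*(y/q) * A (Suc m) (y/q) z * A (Suc m) y z"
proof -
  have "D (Suc (Suc m)) (rem 0 (FF q (y/q) z)) * D m (rem ((1-q)*(y/q)) (FF q (y/q) z))
      - D (Suc (Suc m)) (rem ((1-q)*(y/q)) (FF q (y/q) z)) * D m (rem 0 (FF q (y/q) z))
      = ((1-q)*(y/q) - 0) * D (Suc m) (rem ((1-q)*(y/q)) (rem 0 (FF q (y/q) z))) * D (Suc m) (FF q (y/q) z)"
    by (rule G3) (rule FF_supp)
  thus ?thesis unfolding rem0 S1[OF q qr] by (simp add: algebra_simps)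
qed

lemma I5:
  fixes y z :: complex and m :: nat
  shows "A (Suc (Suc m)) y (z/q) * A m y z - A (Suc (Suc m)) y z * A m y (z/q)
    = (1-q)*(z/q) * A (Suc m) y (z/q) * A (Suc m) y z"
proof -
  have "D (Suc (Suc m)) (rem 0 (FF q y (z/q))) * D m (rem ((1-q)*(z/q)) (FF q y (z/q)))
      - D (Suc (Suc m)) (rem ((1-q)*(z/q)) (FF q y (z/q))) * D m (rem 0 (FF q y (z/q)))
      = ((1-q)*(z/q) - 0) * D (Suc m) (rem ((1-q)*(z/q)) (rem 0 (FF q y (z/q)))) * D (Suc m) (FF q y (z/q))"
    by (rule G3) (rule FF_supp)
  thus ?thesis unfolding rem0 S2[OF q qr] by (simp add: algebra_simps)
qed

lemma tri3: "Suc (Suc m) * (Suc (Suc m) + 1) div 2 = m * (m+1) div 2 + (2*m+3)"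
proof -
  have "Suc (Suc m) * (Suc (Suc m) + 1) = m * (m+1) + 2 * (2*m+3)" by (simp add: algebra_simps)
  thus ?thesis by simp
qed

lemma I6s:
  fixes y z :: complex and m :: nat
  shows "A (Suc (Suc m)) y z * A m (y/q) z - q^(2*m+3) * (A (Suc (Suc m)) (y/q) z * A m y z)
    = (1-q)*(1+z)*q^(Suc m) * (A (Suc m) y (q*z) * A (Suc m) (y/q) (z/q))"
proof -
  define Q where "Q = q ^ (m * (m+1) div 2)"
  have Q: "Q \<noteq> 0" using q by (simp add: Q_def)
  have sn1: "q ^ (Suc m * (Suc m + 1) div 2) = Q * q ^ Suc m" unfolding tri2 Q_def by (simp add: power_add)
  have sn2: "q ^ (Suc (Suc m) * (Suc (Suc m) + 1) div 2) = Q * q ^ (2*m+3)" unfolding tri3 Q_def by (simp add: power_add)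
  have "D (Suc (Suc m)) (FF q y z) * D m (sc q (FF q (y/q) z))
      - D (Suc (Suc m)) (sc q (FF q (y/q) z)) * D m (FF q y z)
      = ((1-q)*z - (-(1-q))) * D (Suc m) (FF q y (q*z)) * D (Suc m) (sc q (FF q (y/q) (z/q)))"
    using G3[where g="sc q (FF q (y/q) (z/q))" and a="(1-q)*z" and b="-(1-q)" and m=m, OF fg4]
    unfolding fg1 fg2 S2'[OF q qr, where y=y and z=z] .
  hence "Q * (A (Suc (Suc m)) y z * A m (y/q) z - q^(2*m+3) * (A (Suc (Suc m)) (y/q) z * A m y z))
    = Q * ((1-q)*(1+z)*q^(Suc m) * (A (Suc m) y (q*z) * A (Suc m) (y/q) (z/q)))"
    unfolding D_sc[OF q] sn1 sn2 Q_def[symmetric] by (simp add: algebra_simps)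
  thus ?thesis using Q mult_left_cancel by blast
qed

lemma I6:
  fixes y z :: complex and m :: nat
  shows "q^(2*Suc m) * y * A (Suc m) (y/q) z * A (Suc m) y z
      + q^(Suc m) * (1+z) * A (Suc m) y (q*z) * A (Suc m) (y/q) (z/q)
    = (1 - q^(2*Suc m+1)) / (1-q) * A (Suc (Suc m)) y z * A m (y/q) z"
proof -
  define Aq where "Aq = A (Suc (Suc m)) (y/q) z * A m y z"
  define B where "B = A (Suc (Suc m)) y z * A m (y/q) z"
  define X where "X = A (Suc m) (y/q) z * A (Suc m) y z"
  define C where "C = A (Suc m) y (q*z) * A (Suc m) (y/q) (z/q)"
  have h1: "Aq - B = (1-q)*(y/q) * X" using I4[where y=y and z=z and m=m] by (simp add: Aq_def B_def X_def mult.assoc)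
  have h2: "B - q^(2*m+3) * Aq = (1-q)*(1+z)*q^(Suc m) * C" using I6s[where y=y and z=z and m=m] by (simp add: Aq_def B_def C_def)
  have h1': "(1-q)*y*X = q*(Aq - B)" using h1 q by (simp add: field_simps)
  have "(1-q) * (q^(2*Suc m) * y * X + q^(Suc m) * (1+z) * C) = q^(2*Suc m) * ((1-q)*y*X) + (1-q)*(1+z)*q^(Suc m) * C"
    by (simp add: algebra_simps)
  also have "\<dots> = q^(2*Suc m) * (q*(Aq - B)) + (B - q^(2*m+3) * Aq)" unfolding h1' h2 ..
  also have "\<dots> = (1 - q^(2*Suc m+1)) * B"
  proof -
    have "2*Suc m + 1 = 2*m+3" by simp
    hence "q^(2*Suc m) * q = q^(2*m+3)" "q^(2*Suc m+1) = q^(2*m+3)" by (metis power_Suc2 Suc_eq_plus1)+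
    thus ?thesis by (simp add: algebra_simps)
  qed
  finally have "(1-q) * (q^(2*Suc m) * y * X + q^(Suc m) * (1+z) * C) = (1 - q^(2*Suc m+1)) * B" .
  hence "q^(2*Suc m) * y * X + q^(Suc m) * (1+z) * C = (1 - q^(2*Suc m+1)) / (1-q) * B"
    using q1' by (simp add: field_simps)
  thus ?thesis by (simp add: X_def C_def B_def mult.assoc)
qed

end


lemma D0: "D 0 g = 1" by (simp add: D_def)

lemma D1: "D 1 g = g 1"
  unfolding D_def by (subst det_single) auto

lemma phiA: "phi q (int n) y z = D n (FF q y z)"
  by (simp add: phi_def phi_nat_D FF_def)

definition sg :: "nat \<Rightarrow> complex" where "sg M = (-1)^(M*(M+1) div 2)"

lemma phi_neg: "phi q (- int M - 1) y z = sg M * D M (FF q y z)"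
proof -
  have "(- int M - 1) * (- int M - 1 + 1) div 2 = int (M*(M+1) div 2)"
  proof -
    have "(- int M - 1) * (- int M - 1 + 1) = int (M*(M+1))" by (simp add: algebra_simps)
    thus ?thesis by (simp add: zdiv_int)
  qed
  thus ?thesis by (simp add: phi_def phi_nat_D FF_def sg_def)
qed

lemma sg0: "sg 0 = 1" by (simp add: sg_def)
lemma sg1: "sg 1 = -1" by (simp add: sg_def)
lemma sg_sq: "sg M * sg M = 1" unfolding sg_def by (simp add: power_mult_distrib[symmetric])
lemma sg_pm: "sg m * sg (Suc (Suc m)) = -1"
proof -
  have e: "Suc (Suc m) * (Suc (Suc m) + 1) = m * (m+1) + 2 * (2*m+3)" by (simp add: algebra_simps)
  have "Suc (Suc m) * (Suc (Suc m) + 1) div 2 = m * (m+1) div 2 + (2*m+3)" unfolding e by simp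
  hence h: "m*(m+1) div 2 + Suc (Suc m) * (Suc (Suc m) + 1) div 2 = Suc (2 * (m*(m+1) div 2 + m + 1))" by simp
  have "sg m * sg (Suc (Suc m)) = (-1)^(Suc (2 * (m*(m+1) div 2 + m + 1)))"
    unfolding sg_def power_add[symmetric] h ..
  also have "\<dots> = -1" by simp
  finally show ?thesis .
qed

lemma core6:
  fixes P q y X V B Aq :: complex
  assumes P: "P \<noteq> 0" and q: "q \<noteq> 0" and q1: "1 - q \<noteq> 0"
    and hV: "P*y*X + V = (1-P*q)/(1-q)*B" and h4: "(1-q)*(y*X) = q*Aq - q*B"
  shows "y*X/(P*q^2) + V/(P*q) = (1 - 1/(P*q))/(1-q)*(-Aq)"
proof -
  define Y where "Y = y*X"
  define K where "K = P*q^2*(1-q)"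
  have K: "K \<noteq> 0" using P q q1 by (simp add: K_def)
  have hV2: "(1-q)*V = (1-P*q)*B - (1-q)*P*Y" using hV q1 unfolding Y_def by (simp add: field_simps)
  have l: "K*(Y/(P*q^2) + V/(P*q)) = (1-q)*Y + q*((1-q)*V)"
    unfolding K_def using P q by (simp add: field_simps power2_eq_square)
  have r: "K*((1 - 1/(P*q))/(1-q)*(-Aq)) = q*(1-P*q)*Aq"
    unfolding K_def using P q q1 by (simp add: field_simps power2_eq_square)
  have "(1-q)*Y + q*((1-q)*V) = (1-q)*Y + q*((1-P*q)*B) - P*q*((1-q)*Y)"
    unfolding hV2 by (simp add: algebra_simps)
  also have "\<dots> = q*(1-P*q)*Aq" unfolding h4[folded Y_def] by (simp add: algebra_simps)
  finally have "K*(Y/(P*q^2) + V/(P*q)) = K*((1 - 1/(P*q))/(1-q)*(-Aq))" unfolding l r .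
  hence "Y/(P*q^2) + V/(P*q) = (1 - 1/(P*q))/(1-q)*(-Aq)" using mult_left_cancel[OF K] by blast
  thus ?thesis unfolding Y_def .
qed

lemma neg6alg:
  fixes q y z Aq B X C :: complex
  assumes q: "q \<noteq> 0" and q1: "1 - q \<noteq> 0"
    and h4: "Aq - B = (1-q)*(y/q)*X"
    and h6: "q^(2*Suc m)*y*X + q^(Suc m)*(1+z)*C = (1 - q^(2*Suc m+1))/(1-q)*B"
  shows "y*X/q^(2*m+4) + (1+z)*C/q^(m+2) = (1 - 1/q^(2*m+3))/(1-q) * (-Aq)"
proof -
  define P where "P = q^(2*Suc m)"
  define V where "V = q^(Suc m)*((1+z)*C)"
  have P: "P \<noteq> 0" using q by (simp add: P_def)
  have e1: "q^(2*Suc m+1) = P*q" unfolding P_def by simp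
  have e2: "q^(2*m+4) = P*q^2"
  proof - have "2*m+4 = 2*Suc m + 2" by simp
    thus ?thesis unfolding P_def by (simp only: power_add) qed
  have e3: "q^(2*m+3) = P*q"
  proof - have "2*m+3 = 2*Suc m + 1" by simp
    thus ?thesis unfolding P_def by (simp only: power_add power_one_right) qed
  have e4: "P*q = q^(Suc m) * q^(m+2)"
  proof - have "2*Suc m + 1 = Suc m + (m+2)" by simp
    thus ?thesis unfolding e1[symmetric] by (simp only: power_add) qed
  have hV: "P*y*X + V = (1-P*q)/(1-q)*B" using h6 unfolding e1 P_def V_def by (simp add: mult.assoc)
  have h4': "(1-q)*(y*X) = q*Aq - q*B" using h4 q by (simp add: field_simps)
  have c: "y*X/(P*q^2) + V/(P*q) = (1 - 1/(P*q))/(1-q)*(-Aq)" by (rule core6[OF P q q1 hV h4'])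
  have v: "V/(P*q) = (1+z)*C/q^(m+2)" unfolding e4 V_def using q by simp
  show ?thesis using c unfolding v e2 e3 .
qed

lemma powi_nat: "(q::complex) powi (int k) = q ^ k" by (simp add: power_int_of_nat)
lemma powi_neg: "(q::complex) powi (- int k) = 1 / q ^ k" by (simp add: power_int_minus_divide power_int_of_nat)

theorem proposition3:
  fixes q :: complex and N :: int and y z :: complex
  assumes "q \<noteq> 0" and "\<forall>n::nat. n > 0 \<longrightarrow> q ^ n \<noteq> 1"
  shows
  "(y * phi q (N+1) (y/q) z * phi q N y (z/q) - z * phi q (N+1) y (z/q) * phi q N (y/q) z
     = (y - z) * phi q (N+1) (y/q) (z/q) * phi q N y z) \<and>
   (y * phi q (N+1) y (z/q) * phi q N (y/q) z - z * phi q (N+1) (y/q) z * phi q N y (z/q)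
     = (y - z) * phi q (N+1) y z * phi q N (y/q) (z/q)) \<and>
   (q powi (-N-1) * z * phi q (N+1) y z * phi q N (y/q) z + phi q (N+1) (y/q) z * phi q N y z
     = (1 + z) * phi q (N+1) (y/q) (z/q) * phi q N y (q*z)) \<and>
   (phi q (N+1) (y/q) z * phi q (N-1) y z - phi q (N+1) y z * phi q (N-1) (y/q) z
     = (1 - q) * (y/q) * phi q N (y/q) z * phi q N y z) \<and>
   (phi q (N+1) y (z/q) * phi q (N-1) y z - phi q (N+1) y z * phi q (N-1) y (z/q)
     = (1 - q) * (z/q) * phi q N y (z/q) * phi q N y z) \<and>
   (q powi (2*N) * y * phi q N (y/q) z * phi q N y z
     + q powi N * (1 + z) * phi q N y (q*z) * phi q N (y/q) (z/q)
     = (1 - q powi (2*N+1)) / (1 - q) * phi q (N+1) y z * phi q (N-1) (y/q) z)"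
proof -
  note q = assms(1) and qr = assms(2)
  have q1: "q \<noteq> 1" using qr[rule_format, of 1] by simp
  have q1': "1 - q \<noteq> 0" using q1 by simp
  show ?thesis
  proof (cases "N \<ge> 0")
    case True
    then obtain n where N: "N = int n" using nonneg_int_cases by blast
    have "N + 1 = int (Suc n)" using N by simp
    hence f1: "phi q (N+1) = (\<lambda>y z. D (Suc n) (FF q y z))" by (intro ext) (simp only: phiA)
    have f0: "phi q N = (\<lambda>y z. D n (FF q y z))" by (intro ext) (simp only: N phiA)
    show ?thesis
    proof (cases n)
      case 0
      have "N - 1 = - int 0 - 1" using N 0 by simp
      hence fm: "phi q (N-1) = (\<lambda>y z. 1)" by (intro ext) (simp only: phi_neg sg0 D0 mult_1)
      have d1: "D (Suc 0) (FF q y z) = 1 + y + z" for y z using D1 FF1[OF q1] by simp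
      have pw: "q powi (-N-1) = 1/q" "q powi (2*N) = 1" "q powi N = 1" "q powi (2*N+1) = q"
        using N 0 q by (simp_all add: power_int_minus_divide)
      show ?thesis unfolding f1 f0 fm pw unfolding 0 d1 D0 using q q1'
        by (intro conjI) (simp_all add: field_simps)
    next
      case (Suc m)
      have "N - 1 = int m" using N Suc by simp
      hence fm: "phi q (N-1) = (\<lambda>y z. D m (FF q y z))" by (intro ext) (simp only: phiA)
      have pw: "q powi (-N-1) = q powi (- int n - 1)" "q powi (2*N) = q^(2*Suc m)" "q powi N = q^(Suc m)"
          "q powi (2*N+1) = q^(2*Suc m+1)"
      proof -
        show "q powi (-N-1) = q powi (- int n - 1)" using N by simp
        have "2*N = int (2*Suc m)" "N = int (Suc m)" "2*N+1 = int (2*Suc m+1)" using N Suc by simp_all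
        thus "q powi (2*N) = q^(2*Suc m)" "q powi N = q^(Suc m)" "q powi (2*N+1) = q^(2*Suc m+1)"
          by (simp_all only: powi_nat)
      qed
      have i1: "y * D (Suc n) (FF q (y/q) z) * D n (FF q y (z/q)) - z * D (Suc n) (FF q y (z/q)) * D n (FF q (y/q) z)
          = (y - z) * D (Suc n) (FF q (y/q) (z/q)) * D n (FF q y z)" by (rule I1[OF q qr])
      have i2: "y * D (Suc n) (FF q y (z/q)) * D n (FF q (y/q) z) - z * D (Suc n) (FF q (y/q) z) * D n (FF q y (z/q))
          = (y - z) * D (Suc n) (FF q y z) * D n (FF q (y/q) (z/q))" by (rule I2[OF q qr])
      have i3: "q powi (- int n - 1) * z * D (Suc n) (FF q y z) * D n (FF q (y/q) z) + D (Suc n) (FF q (y/q) z) * D n (FF q y z)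
          = (1 + z) * D (Suc n) (FF q (y/q) (z/q)) * D n (FF q y (q*z))" by (rule I3[OF q qr])
      have i4: "D (Suc (Suc m)) (FF q (y/q) z) * D m (FF q y z) - D (Suc (Suc m)) (FF q y z) * D m (FF q (y/q) z)
          = (1-q)*(y/q) * D (Suc m) (FF q (y/q) z) * D (Suc m) (FF q y z)" by (rule I4[OF q qr])
      have i5: "D (Suc (Suc m)) (FF q y (z/q)) * D m (FF q y z) - D (Suc (Suc m)) (FF q y z) * D m (FF q y (z/q))
          = (1-q)*(z/q) * D (Suc m) (FF q y (z/q)) * D (Suc m) (FF q y z)" by (rule I5[OF q qr])
      have i6: "q^(2*Suc m) * y * D (Suc m) (FF q (y/q) z) * D (Suc m) (FF q y z)
          + q^(Suc m) * (1+z) * D (Suc m) (FF q y (q*z)) * D (Suc m) (FF q (y/q) (z/q))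
          = (1 - q^(2*Suc m+1)) / (1-q) * D (Suc (Suc m)) (FF q y z) * D m (FF q (y/q) z)" by (rule I6[OF q qr])
      show ?thesis unfolding f1 f0 fm pw
        using i1 i2 i3 i4 i5 i6 unfolding Suc by (intro conjI) (simp_all add: mult_ac)
    qed
  next
    case False
    define M where "M = nat (-N-1)"
    have N: "N = - int M - 1" using False by (simp add: M_def)
    have f0: "phi q N = (\<lambda>y z. sg M * D M (FF q y z))" by (intro ext) (simp only: N phi_neg)
    have "N - 1 = - int (Suc M) - 1" using N by simp
    hence fm: "phi q (N-1) = (\<lambda>y z. sg (Suc M) * D (Suc M) (FF q y z))" by (intro ext) (simp only: phi_neg)
    show ?thesis
    proof (cases M)
      case 0
      have "N + 1 = int 0" using N 0 by simp
      hence f1: "phi q (N+1) = (\<lambda>y z. 1)" by (intro ext) (simp only: phiA D0)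
      have d1: "D (Suc 0) (FF q y z) = 1 + y + z" for y z using D1 FF1[OF q1] by simp
      have pw: "q powi (-N-1) = 1" "q powi (2*N) = 1/q^2" "q powi N = 1/q" "q powi (2*N+1) = 1/q"
        using N 0 q by (simp_all add: power_int_minus_divide)
      have sg1': "sg (Suc 0) = -1" by (simp add: sg_def)
      show ?thesis unfolding f1 f0 fm pw unfolding 0 d1 D0 sg0 sg1' using q q1'
        by (intro conjI) (simp_all add: field_simps power2_eq_square)
    next
      case (Suc m)
      have "N + 1 = - int m - 1" using N Suc by simp
      hence f1: "phi q (N+1) = (\<lambda>y z. sg m * D m (FF q y z))" by (intro ext) (simp only: phi_neg)
      have pw: "q powi (-N-1) = q^(Suc m)" "q powi (2*N) = 1/q^(2*m+4)" "q powi N = 1/q^(m+2)"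
          "q powi (2*N+1) = 1/q^(2*m+3)"
      proof -
        have "-N-1 = int (Suc m)" "2*N = - int (2*m+4)" "N = - int (m+2)" "2*N+1 = - int (2*m+3)"
          using N Suc by simp_all
        thus "q powi (-N-1) = q^(Suc m)" "q powi (2*N) = 1/q^(2*m+4)" "q powi N = 1/q^(m+2)"
          "q powi (2*N+1) = 1/q^(2*m+3)"
          by (simp_all only: powi_nat powi_neg)
      qed
      have ss: "sg (Suc m) * sg (Suc m) = 1" "sg m * sg (Suc (Suc m)) = -1" by (rule sg_sq, rule sg_pm)
      have i1: "y * D (Suc m) (FF q (y/q) z) * D m (FF q y (z/q)) - z * D (Suc m) (FF q y (z/q)) * D m (FF q (y/q) z)
          = (y - z) * D (Suc m) (FF q (y/q) (z/q)) * D m (FF q y z)" by (rule I1[OF q qr])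
      have i2: "y * D (Suc m) (FF q y (z/q)) * D m (FF q (y/q) z) - z * D (Suc m) (FF q (y/q) z) * D m (FF q y (z/q))
          = (y - z) * D (Suc m) (FF q y z) * D m (FF q (y/q) (z/q))" by (rule I2[OF q qr])
      have i3: "q^(Suc m) * z * D (Suc m) (FF q (y/q) z) * D m (FF q y z) + D (Suc m) (FF q y z) * D m (FF q (y/q) z)
          = (1 + z) * D (Suc m) (FF q y (q*z)) * D m (FF q (y/q) (z/q))" by (rule I3'[OF q qr])
      have i4: "D (Suc (Suc m)) (FF q (y/q) z) * D m (FF q y z) - D (Suc (Suc m)) (FF q y z) * D m (FF q (y/q) z)
          = (1-q)*(y/q) * D (Suc m) (FF q (y/q) z) * D (Suc m) (FF q y z)" by (rule I4[OF q qr])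
      have i5: "D (Suc (Suc m)) (FF q y (z/q)) * D m (FF q y z) - D (Suc (Suc m)) (FF q y z) * D m (FF q y (z/q))
          = (1-q)*(z/q) * D (Suc m) (FF q y (z/q)) * D (Suc m) (FF q y z)" by (rule I5[OF q qr])
      have i6: "q^(2*Suc m) * y * D (Suc m) (FF q (y/q) z) * D (Suc m) (FF q y z)
          + q^(Suc m) * (1+z) * D (Suc m) (FF q y (q*z)) * D (Suc m) (FF q (y/q) (z/q))
          = (1 - q^(2*Suc m+1)) / (1-q) * D (Suc (Suc m)) (FF q y z) * D m (FF q (y/q) z)" by (rule I6[OF q qr])
      have n6: "y * (D (Suc m) (FF q (y/q) z) * D (Suc m) (FF q y z)) / q^(2*m+4)
          + (1+z) * (D (Suc m) (FF q y (q*z)) * D (Suc m) (FF q (y/q) (z/q))) / q^(m+2)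
          = (1 - 1/q^(2*m+3))/(1-q) * (- (D (Suc (Suc m)) (FF q (y/q) z) * D m (FF q y z)))"
      proof (rule neg6alg[OF q q1'])
        show "D (Suc (Suc m)) (FF q (y/q) z) * D m (FF q y z) - D (Suc (Suc m)) (FF q y z) * D m (FF q (y/q) z)
          = (1-q)*(y/q)*(D (Suc m) (FF q (y/q) z) * D (Suc m) (FF q y z))"
          using i4 by (simp only: mult.assoc)
        show "q^(2*Suc m)*y*(D (Suc m) (FF q (y/q) z) * D (Suc m) (FF q y z))
          + q^(Suc m)*(1+z)*(D (Suc m) (FF q y (q*z)) * D (Suc m) (FF q (y/q) (z/q)))
          = (1 - q^(2*Suc m+1))/(1-q)*(D (Suc (Suc m)) (FF q y z) * D m (FF q (y/q) z))"
          using i6 by (simp only: mult.assoc)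
      qed
      show ?thesis unfolding f1 f0 fm pw unfolding Suc
      proof (intro conjI)
        show "y * (sg m * D m (FF q (y/q) z)) * (sg (Suc m) * D (Suc m) (FF q y (z/q))) -
            z * (sg m * D m (FF q y (z/q))) * (sg (Suc m) * D (Suc m) (FF q (y/q) z)) =
            (y - z) * (sg m * D m (FF q (y/q) (z/q))) * (sg (Suc m) * D (Suc m) (FF q y z))"
        proof -
          have "sg m * sg (Suc m) * (y * D (Suc m) (FF q y (z/q)) * D m (FF q (y/q) z) - z * D (Suc m) (FF q (y/q) z) * D m (FF q y (z/q)))
            = sg m * sg (Suc m) * ((y - z) * D (Suc m) (FF q y z) * D m (FF q (y/q) (z/q)))" unfolding i2 ..
          thus ?thesis by (simp add: algebra_simps)
        qed
        show "y * (sg m * D m (FF q y (z/q))) * (sg (Suc m) * D (Suc m) (FF q (y/q) z)) -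
            z * (sg m * D m (FF q (y/q) z)) * (sg (Suc m) * D (Suc m) (FF q y (z/q))) =
            (y - z) * (sg m * D m (FF q y z)) * (sg (Suc m) * D (Suc m) (FF q (y/q) (z/q)))"
        proof -
          have "sg m * sg (Suc m) * (y * D (Suc m) (FF q (y/q) z) * D m (FF q y (z/q)) - z * D (Suc m) (FF q y (z/q)) * D m (FF q (y/q) z))
            = sg m * sg (Suc m) * ((y - z) * D (Suc m) (FF q (y/q) (z/q)) * D m (FF q y z))" unfolding i1 ..
          thus ?thesis by (simp add: algebra_simps)
        qed
        show "q^(Suc m) * z * (sg m * D m (FF q y z)) * (sg (Suc m) * D (Suc m) (FF q (y/q) z)) +
            sg m * D m (FF q (y/q) z) * (sg (Suc m) * D (Suc m) (FF q y z)) =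
            (1 + z) * (sg m * D m (FF q (y/q) (z/q))) * (sg (Suc m) * D (Suc m) (FF q y (q*z)))"
        proof -
          have "sg m * sg (Suc m) * (q^(Suc m) * z * D (Suc m) (FF q (y/q) z) * D m (FF q y z) + D (Suc m) (FF q y z) * D m (FF q (y/q) z))
            = sg m * sg (Suc m) * ((1 + z) * D (Suc m) (FF q y (q*z)) * D m (FF q (y/q) (z/q)))" unfolding i3 ..
          thus ?thesis by (simp add: algebra_simps)
        qed
        show "sg m * D m (FF q (y/q) z) * (sg (Suc (Suc m)) * D (Suc (Suc m)) (FF q y z)) -
            sg m * D m (FF q y z) * (sg (Suc (Suc m)) * D (Suc (Suc m)) (FF q (y/q) z)) =
            (1 - q) * (y/q) * (sg (Suc m) * D (Suc m) (FF q (y/q) z)) * (sg (Suc m) * D (Suc m) (FF q y z))"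
        proof -
          have "(sg m * sg (Suc (Suc m))) * (D m (FF q (y/q) z) * D (Suc (Suc m)) (FF q y z) - D m (FF q y z) * D (Suc (Suc m)) (FF q (y/q) z))
            = (sg (Suc m) * sg (Suc m)) * ((1-q)*(y/q) * D (Suc m) (FF q (y/q) z) * D (Suc m) (FF q y z))"
            unfolding ss i4[symmetric] by (simp add: algebra_simps)
          thus ?thesis by (simp add: algebra_simps)
        qed
        show "sg m * D m (FF q y (z/q)) * (sg (Suc (Suc m)) * D (Suc (Suc m)) (FF q y z)) -
            sg m * D m (FF q y z) * (sg (Suc (Suc m)) * D (Suc (Suc m)) (FF q y (z/q))) =
            (1 - q) * (z/q) * (sg (Suc m) * D (Suc m) (FF q y (z/q))) * (sg (Suc m) * D (Suc m) (FF q y z))"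
        proof -
          have "(sg m * sg (Suc (Suc m))) * (D m (FF q y (z/q)) * D (Suc (Suc m)) (FF q y z) - D m (FF q y z) * D (Suc (Suc m)) (FF q y (z/q)))
            = (sg (Suc m) * sg (Suc m)) * ((1-q)*(z/q) * D (Suc m) (FF q y (z/q)) * D (Suc m) (FF q y z))"
            unfolding ss i5[symmetric] by (simp add: algebra_simps)
          thus ?thesis by (simp add: algebra_simps)
        qed
        show "1 / q^(2*m+4) * y * (sg (Suc m) * D (Suc m) (FF q (y/q) z)) * (sg (Suc m) * D (Suc m) (FF q y z)) +
            1 / q^(m+2) * (1 + z) * (sg (Suc m) * D (Suc m) (FF q y (q*z))) * (sg (Suc m) * D (Suc m) (FF q (y/q) (z/q))) =
            (1 - 1 / q^(2*m+3)) / (1 - q) * (sg m * D m (FF q y z)) * (sg (Suc (Suc m)) * D (Suc (Suc m)) (FF q (y/q) z))"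
        proof -
          have "(sg (Suc m) * sg (Suc m)) * (y * (D (Suc m) (FF q (y/q) z) * D (Suc m) (FF q y z)) / q^(2*m+4)
            + (1+z) * (D (Suc m) (FF q y (q*z)) * D (Suc m) (FF q (y/q) (z/q))) / q^(m+2))
            = (sg m * sg (Suc (Suc m))) * ((1 - 1/q^(2*m+3))/(1-q) * (D (Suc (Suc m)) (FF q (y/q) z) * D m (FF q y z)))"
            unfolding ss n6 by simp
          thus ?thesis by (simp add: algebra_simps)
        qed
      qed
    qed
  qed
qed

end
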